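(* Let $K$ be a field of characteristic $0$, $1\le n\le d$, $X=(x_1,\dots,x_n)$, and let $A=\{a_1^{(d_1)},\dots,a_m^{(d_m)}\}\subset K$ be a multiset ($a_i$ pairwise distinct, repeated $d_i$ times) with $d_1+\cdots+d_m=d$. Let $f=\prod_{i=1}^m(x-a_i)^{d_i}$, $F=\{f(x_1),\dots,f(x_n)\}$ and $v_n=\prod_{1\le i<j\le n}(x_j-x_i)$. Then for every symmetric polynomial $h\in K[X]$, $$r_A(h)=\frac{r_F(v_n\,h)}{v_n},$$ where $r_F(\cdot)$ denotes the normal form modulo the Gröbner basis $F$ with respect to the lexicographic order with $x_1\prec\cdots\prec x_n$, and $r_A(h)$ is the symmetric Hermite interpolant of $h$ with respect to $A$.
   Context: Write $f=x^d+f_{d-1}x^{d-1}+\cdots+f_0$ and let $G=\{g_1,\dots,g_n\}$ with $g_i(x_1,\dots,x_i)=\sum_{k=i-1}^d f_k\,h^{(i)}_{k-i+1}$ ($f_d=1$), where $h^{(i)}_j=\sum_{k_1+\cdots+k_i=j}x_1^{k_1}\cdots x_i^{k_i}$ is the complete homogeneous symmetric polynomial of degree $j$ in $x_1,\dots,x_i$. The symmetric Hermite interpolant of a symmetric $h\in K[X]$ is $r_A(h):=r_G(h)$, the normal form of $h$ modulo the Gröbner basis $G$ for the lexicographic order with $x_1\prec\cdots\prec x_n$; it is a symmetric polynomial of degree $\le d-n$ in each variable. *)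

theory Defs
  imports "HOL-Library.Poly_Mapping" "HOL-Library.Multiset"
    "HOL-Computational_Algebra.Polynomial" "HOL-Combinatorics.Permutations"
begin

text \<open>Multivariate polynomials over 'a in the variables x_0, x_1, ... (index i stands for
  the paper's variable x_(i+1)): finitely supported maps from monomials (exponent vectors
  nat =>0 nat) to coefficients.\<close>

type_synonym 'a mpoly = "(nat \<Rightarrow>\<^sub>0 nat) \<Rightarrow>\<^sub>0 'a"

definition mconst :: "'a::comm_ring_1 \<Rightarrow> 'a mpoly" where
  "mconst c = Poly_Mapping.single 0 c"

definition mvar :: "nat \<Rightarrow> 'a::comm_ring_1 mpoly" where
  "mvar i = Poly_Mapping.single (Poly_Mapping.single i 1) 1"

definition mvars :: "'a::comm_ring_1 mpoly \<Rightarrow> nat set" where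
  "mvars p = \<Union> (Poly_Mapping.keys ` Poly_Mapping.keys p)"

definition mrename :: "(nat \<Rightarrow> nat) \<Rightarrow> 'a::comm_ring_1 mpoly \<Rightarrow> 'a mpoly" where
  "mrename \<sigma> p = (\<Sum>m\<in>Poly_Mapping.keys p.
      mconst (Poly_Mapping.lookup p m) *
      (\<Prod>i\<in>Poly_Mapping.keys m. mvar (\<sigma> i) ^ Poly_Mapping.lookup m i))"

definition symmetric_in :: "nat \<Rightarrow> 'a::comm_ring_1 mpoly \<Rightarrow> bool" where
  "symmetric_in n h \<longleftrightarrow> mvars h \<subseteq> {..<n} \<and>
     (\<forall>\<sigma>. \<sigma> permutes {..<n} \<longrightarrow> mrename \<sigma> h = h)"

definition lex_less :: "(nat \<Rightarrow>\<^sub>0 nat) \<Rightarrow> (nat \<Rightarrow>\<^sub>0 nat) \<Rightarrow> bool" where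
  "lex_less m m' \<longleftrightarrow> (\<exists>k. Poly_Mapping.lookup m k < Poly_Mapping.lookup m' k \<and>
      (\<forall>j>k. Poly_Mapping.lookup m j = Poly_Mapping.lookup m' j))"

definition lead_mono :: "'a::comm_ring_1 mpoly \<Rightarrow> (nat \<Rightarrow>\<^sub>0 nat)" where
  "lead_mono p = (THE m. m \<in> Poly_Mapping.keys p \<and>
      (\<forall>m'\<in>Poly_Mapping.keys p. m' \<noteq> m \<longrightarrow> lex_less m' m))"

definition mono_dvd :: "(nat \<Rightarrow>\<^sub>0 nat) \<Rightarrow> (nat \<Rightarrow>\<^sub>0 nat) \<Rightarrow> bool" where
  "mono_dvd m m' \<longleftrightarrow> (\<forall>i. Poly_Mapping.lookup m i \<le> Poly_Mapping.lookup m' i)"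

definition mideal :: "'a::comm_ring_1 mpoly set \<Rightarrow> 'a mpoly set" where
  "mideal G = {\<Sum>g\<in>G. c g * g | c. True}"

definition normal_form :: "nat \<Rightarrow> 'a::comm_ring_1 mpoly set \<Rightarrow> 'a mpoly \<Rightarrow> 'a mpoly" where
  "normal_form n G h = (THE p. mvars p \<subseteq> {..<n} \<and> h - p \<in> mideal G \<and>
      (\<forall>m\<in>Poly_Mapping.keys p. \<forall>g\<in>G. \<not> mono_dvd (lead_mono g) m))"

definition upoly_at :: "'a::comm_ring_1 poly \<Rightarrow> nat \<Rightarrow> 'a mpoly" where
  "upoly_at f i = (\<Sum>k\<le>degree f. mconst (coeff f k) * mvar i ^ k)"

definition complete_hom :: "nat \<Rightarrow> nat \<Rightarrow> 'a::comm_ring_1 mpoly" where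
  "complete_hom i j = (\<Sum>m\<in>{m::nat \<Rightarrow>\<^sub>0 nat. Poly_Mapping.keys m \<subseteq> {..<i} \<and>
      (\<Sum>k\<in>Poly_Mapping.keys m. Poly_Mapping.lookup m k) = j}.
      Poly_Mapping.single m 1)"

definition mset_poly :: "'a::comm_ring_1 multiset \<Rightarrow> 'a poly" where
  "mset_poly A = prod_mset (image_mset (\<lambda>a. [:-a, 1:]) A)"

definition herm_g :: "'a::comm_ring_1 poly \<Rightarrow> nat \<Rightarrow> 'a mpoly" where
  "herm_g f i = (\<Sum>k\<in>{i-1..degree f}. mconst (coeff f k) * complete_hom i (k - (i - 1)))"

definition herm_G :: "'a::comm_ring_1 poly \<Rightarrow> nat \<Rightarrow> 'a mpoly set" where
  "herm_G f n = herm_g f ` {1..n}"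

definition sym_hermite :: "'a::comm_ring_1 multiset \<Rightarrow> nat \<Rightarrow> 'a mpoly \<Rightarrow> 'a mpoly" where
  "sym_hermite A n h = normal_form n (herm_G (mset_poly A) n) h"

definition herm_F :: "'a::comm_ring_1 multiset \<Rightarrow> nat \<Rightarrow> 'a mpoly set" where
  "herm_F A n = (\<lambda>i. upoly_at (mset_poly A) i) ` {..<n}"

definition vandermonde :: "nat \<Rightarrow> 'a::comm_ring_1 mpoly" where
  "vandermonde n = (\<Prod>(i, j)\<in>{(i, j). i < j \<and> j < n}. mvar j - mvar i)"

end

theory Submission
  imports Defs
begin


section \<open>Basics on mpoly\<close>

abbreviation pkeys :: "('a \<Rightarrow>\<^sub>0 'b::zero) \<Rightarrow> 'a set" where "pkeys \<equiv> Poly_Mapping.keys"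
abbreviation lk :: "('a \<Rightarrow>\<^sub>0 'b::zero) \<Rightarrow> 'a \<Rightarrow> 'b" where "lk \<equiv> Poly_Mapping.lookup"


abbreviation mon :: "(nat \<Rightarrow>\<^sub>0 nat) \<Rightarrow> 'a::comm_ring_1 mpoly" where
  "mon m \<equiv> Poly_Mapping.single m 1"

definition lin :: "((nat \<Rightarrow>\<^sub>0 nat) \<Rightarrow> 'a::comm_ring_1 mpoly) \<Rightarrow> 'a mpoly \<Rightarrow> 'a mpoly" where
  "lin \<phi> p = (\<Sum>m\<in>pkeys p. mconst (lk p m) * \<phi> m)"

lemma mconst_mult_single: "mconst c * Poly_Mapping.single m b = Poly_Mapping.single m (c * b)"
  by (simp add: mconst_def mult_single)

lemma mconst_0[simp]: "mconst 0 = 0" by (simp add: mconst_def)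
lemma mconst_1[simp]: "mconst 1 = 1" by (simp add: mconst_def)
lemma mconst_add: "mconst (a + b) = mconst a + mconst b" by (simp add: mconst_def single_add)
lemma mconst_mult: "mconst (a * b) = mconst a * mconst b" by (simp add: mconst_def mult_single)

lemma lin_add: "lin \<phi> (p + q) = lin \<phi> p + lin \<phi> q"
  unfolding lin_def
  by (rule setsum_keys_plus_distrib) (auto simp: mconst_add distrib_right)

lemma lin_zero[simp]: "lin \<phi> 0 = 0" by (simp add: lin_def)

lemma lin_uminus: "lin \<phi> (- p) = - lin \<phi> p"
  using lin_add[of \<phi> p "-p"] by (simp add: eq_neg_iff_add_eq_0 add.commute)

lemma lin_diff: "lin \<phi> (p - q) = lin \<phi> p - lin \<phi> q"
  using lin_add[of \<phi> p "-q"] lin_uminus[of \<phi> q] by simp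

lemma lin_sum: "lin \<phi> (sum f A) = (\<Sum>a\<in>A. lin \<phi> (f a))"
  by (induction A rule: infinite_finite_induct) (auto simp: lin_add)

lemma lin_single: "lin \<phi> (Poly_Mapping.single m c) = mconst c * \<phi> m"
  by (cases "c = 0") (auto simp: lin_def)

lemma lin_mult_left: "q * lin \<phi> p = lin (\<lambda>m. q * \<phi> m) p"
  unfolding lin_def by (simp add: sum_distrib_left ac_simps)

lemma lin_cong: "(\<And>m. m \<in> pkeys p \<Longrightarrow> \<phi> m = \<psi> m) \<Longrightarrow> lin \<phi> p = lin \<psi> p"
  unfolding lin_def by simp

lemma lin_mon: "lin mon p = p"
proof (rule poly_mapping_eqI)
  fix x
  have "lk (lin mon p) x = (\<Sum>m\<in>pkeys p. lk (Poly_Mapping.single m (lk p m)) x)"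
    by (simp add: lin_def mconst_mult_single lookup_sum)
  also have "\<dots> = (\<Sum>m\<in>pkeys p. if m = x then lk p m else 0)"
    by (rule sum.cong) (auto simp: lookup_single)
  also have "\<dots> = lk p x" by (auto simp: in_keys_iff)
  finally show "lk (lin mon p) x = lk p x" .
qed

lemma keys_lin: "pkeys (lin \<phi> p) \<subseteq> (\<Union>m\<in>pkeys p. pkeys (\<phi> m))"
proof -
  have "pkeys (lin \<phi> p) \<subseteq> (\<Union>m\<in>pkeys p. pkeys (mconst (lk p m) * \<phi> m))"
    unfolding lin_def by (rule keys_sum)
  also have "\<dots> \<subseteq> (\<Union>m\<in>pkeys p. pkeys (\<phi> m))"
  proof -
    have "pkeys (mconst c * q) \<subseteq> pkeys q" for c and q :: "'a mpoly"
      using keys_mult[of "mconst c" q] by (auto simp: mconst_def split: if_splits)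
    then show ?thesis by blast
  qed
  finally show ?thesis .
qed

lemma mpoly_induct[case_names zero single]:
  fixes p :: "'a::comm_ring_1 mpoly"
  assumes "P 0" and "\<And>m c p. P p \<Longrightarrow> P (Poly_Mapping.single m c + p)"
  shows "P p"
proof -
  have "P (\<Sum>m\<in>M. Poly_Mapping.single m (lk p m))" if "finite M" for M
    using that by (induction M rule: finite_induct) (auto intro: assms)
  moreover have "(\<Sum>m\<in>pkeys p. Poly_Mapping.single m (lk p m)) = p"
    using lin_mon[of p] by (simp add: lin_def mconst_mult_single)
  ultimately show ?thesis by (metis finite_keys)
qed

lemma additive_eqI:
  fixes L1 L2 :: "'a::comm_ring_1 mpoly \<Rightarrow> 'b::comm_ring_1 mpoly"
  assumes "\<And>p q. L1 (p + q) = L1 p + L1 q" "\<And>p q. L2 (p + q) = L2 p + L2 q"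
    and "\<And>m c. L1 (Poly_Mapping.single m c) = L2 (Poly_Mapping.single m c)"
  shows "L1 p = L2 p"
proof (induction p rule: mpoly_induct)
  case zero
  have "L1 0 = 0" using assms(1)[of 0 0] by simp
  moreover have "L2 0 = 0" using assms(2)[of 0 0] by simp
  ultimately show ?case by simp
next
  case (single m c p)
  then show ?case by (simp add: assms)
qed

lemma mvar_power: "mvar i ^ j = mon (Poly_Mapping.single i j)"
  by (induction j) (auto simp: mvar_def mult_single single_add[symmetric] add.commute)

lemma mon_add: "mon (a + b) = (mon a * mon b :: 'a::comm_ring_1 mpoly)"
  by (simp add: mult_single)

lemma mon_0: "mon 0 = 1" by simp

lemma keys_mconst_mult: "pkeys (mconst c * q) \<subseteq> pkeys q"
  using keys_mult[of "mconst c" q] by (auto simp: mconst_def split: if_splits)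

lemma keys_mon_mult: "pkeys (mon m * q) = (\<lambda>x. m + x) ` pkeys q"
proof -
  have "mon m * q = lin (\<lambda>x. mon (m + x)) q"
    using lin_mult_left[of "mon m" mon q] by (simp add: lin_mon mon_add)
  have "lk (mon m * q) (m + x) = lk q x" for x
  proof -
    have "mon m * q = lin (\<lambda>x. mon (m + x)) q"
      using lin_mult_left[of "mon m" mon q] by (simp add: lin_mon mon_add)
    then have "lk (mon m * q) (m + x) = (\<Sum>y\<in>pkeys q. lk (Poly_Mapping.single (m + y) (lk q y)) (m + x))"
      by (simp add: lin_def mconst_mult_single lookup_sum)
    also have "\<dots> = (\<Sum>y\<in>pkeys q. if y = x then lk q y else 0)"
      by (rule sum.cong) (auto simp: lookup_single)
    also have "\<dots> = lk q x" by (auto simp: in_keys_iff)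
    finally show ?thesis .
  qed
  moreover have "pkeys (mon m * q) \<subseteq> (\<lambda>x. m + x) ` pkeys q"
    using keys_mult[of "mon m" q] by auto
  ultimately show ?thesis by (force simp: in_keys_iff)
qed

lemma lookup_mon_mult: "lk (mon m * q) (m + x) = lk q x"
proof -
  have "mon m * q = lin (\<lambda>x. mon (m + x)) q"
    using lin_mult_left[of "mon m" mon q] by (simp add: lin_mon mon_add)
  then have "lk (mon m * q) (m + x) = (\<Sum>y\<in>pkeys q. lk (Poly_Mapping.single (m + y) (lk q y)) (m + x))"
    by (simp add: lin_def mconst_mult_single lookup_sum)
  also have "\<dots> = (\<Sum>y\<in>pkeys q. if y = x then lk q y else 0)"
    by (rule sum.cong) (auto simp: lookup_single)
  also have "\<dots> = lk q x" by (auto simp: in_keys_iff)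
  finally show ?thesis .
qed


definition mdeg :: "(nat \<Rightarrow>\<^sub>0 nat) \<Rightarrow> nat" where
  "mdeg m = (\<Sum>k\<in>pkeys m. lk m k)"

definition Ms :: "nat set \<Rightarrow> nat \<Rightarrow> (nat \<Rightarrow>\<^sub>0 nat) set" where
  "Ms S j = {m. pkeys m \<subseteq> S \<and> mdeg m = j}"

definition Hs :: "nat set \<Rightarrow> nat \<Rightarrow> 'a::comm_ring_1 mpoly" where
  "Hs S j = (\<Sum>m\<in>Ms S j. mon m)"

lemma complete_hom_Hs: "complete_hom i j = Hs {..<i} j"
  by (simp add: complete_hom_def Hs_def Ms_def mdeg_def)

lemma mdeg_superset: "finite T \<Longrightarrow> pkeys m \<subseteq> T \<Longrightarrow> mdeg m = (\<Sum>k\<in>T. lk m k)"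
  unfolding mdeg_def by (rule sum.mono_neutral_left) (auto simp: in_keys_iff)

lemma mdeg_add: "mdeg (m1 + m2) = mdeg m1 + mdeg m2"
proof -
  let ?T = "pkeys m1 \<union> pkeys m2"
  have "mdeg (m1 + m2) = (\<Sum>k\<in>?T. lk (m1 + m2) k)"
    using keys_add[of m1 m2] by (intro mdeg_superset) auto
  also have "\<dots> = (\<Sum>k\<in>?T. lk m1 k) + (\<Sum>k\<in>?T. lk m2 k)"
    by (simp add: lookup_add sum.distrib)
  also have "\<dots> = mdeg m1 + mdeg m2"
    by (simp add: mdeg_superset[symmetric])
  finally show ?thesis .
qed

lemma mdeg_single[simp]: "mdeg (Poly_Mapping.single k a) = a"
  by (simp add: mdeg_def)

lemma mdeg_0[simp]: "mdeg 0 = 0" by (simp add: mdeg_def)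

lemma mdeg_eq_0: "mdeg m = 0 \<longleftrightarrow> m = 0"
  by (auto simp: mdeg_def in_keys_iff intro: poly_mapping_eqI)

lemma lk_le_mdeg: "lk m k \<le> mdeg m"
proof (cases "k \<in> pkeys m")
  case True
  then show ?thesis unfolding mdeg_def by (intro member_le_sum) auto
qed (simp add: in_keys_iff)

lemma finite_Ms: assumes "finite S" shows "finite (Ms S j)"
proof -
  let ?B = "{f::nat \<Rightarrow> nat. \<forall>x. (x \<in> S \<longrightarrow> f x \<in> {..j}) \<and> (x \<notin> S \<longrightarrow> f x = 0)}"
  have fin: "finite ?B" using assms by (intro finite_set_of_finite_funs) auto
  have "lk ` Ms S j \<subseteq> ?B"
    using lk_le_mdeg by (fastforce simp: Ms_def in_keys_iff)
  then have "finite (lk ` Ms S j)" using fin finite_subset by blast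
  moreover have "inj_on lk (Ms S j)" by (auto intro: inj_onI poly_mapping_eqI)
  ultimately show ?thesis using finite_imageD by blast
qed

lemma Ms_0: "Ms S 0 = {0}" by (auto simp: Ms_def mdeg_eq_0)

lemma Hs_0[simp]: "Hs S 0 = 1" by (simp add: Hs_def Ms_0)

lemma Ms_empty_Suc: "Ms {} (Suc j) = {}" by (auto simp: Ms_def mdeg_def)

lemma Hs_empty_Suc[simp]: "Hs {} (Suc j) = 0" by (simp add: Hs_def Ms_empty_Suc)

lemma lk_minus_nat: "lk (m - m') k = lk m k - lk (m'::nat \<Rightarrow>\<^sub>0 nat) k"
  by (simp add: lookup_minus)

lemma Ms_insert_Suc:
  assumes "a \<notin> S"
  shows "Ms (insert a S) (Suc j) = Ms S (Suc j) \<union> (\<lambda>m. m + Poly_Mapping.single a 1) ` Ms (insert a S) j"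
proof (intro equalityI subsetI)
  fix m assume m: "m \<in> Ms (insert a S) (Suc j)"
  show "m \<in> Ms S (Suc j) \<union> (\<lambda>m. m + Poly_Mapping.single a 1) ` Ms (insert a S) j"
  proof (cases "lk m a = 0")
    case True
    then have "pkeys m \<subseteq> S" using m by (auto simp: Ms_def in_keys_iff)
    then show ?thesis using m by (auto simp: Ms_def)
  next
    case False
    define m' where "m' = m - Poly_Mapping.single a 1"
    have mm: "m = m' + Poly_Mapping.single a 1"
      using False by (intro poly_mapping_eqI) (auto simp: m'_def lookup_add lk_minus_nat lookup_single when_def)
    have "pkeys m' \<subseteq> pkeys m" by (auto simp: m'_def in_keys_iff lk_minus_nat)
    moreover have "mdeg m' = j" using m mm mdeg_add[of m' "Poly_Mapping.single a 1"] by (simp add: Ms_def)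
    ultimately have "m' \<in> Ms (insert a S) j" using m by (auto simp: Ms_def)
    then show ?thesis using mm by blast
  qed
next
  fix m assume "m \<in> Ms S (Suc j) \<union> (\<lambda>m. m + Poly_Mapping.single a 1) ` Ms (insert a S) j"
  then show "m \<in> Ms (insert a S) (Suc j)"
  proof
    assume "m \<in> Ms S (Suc j)" then show ?thesis by (auto simp: Ms_def)
  next
    assume "m \<in> (\<lambda>m. m + Poly_Mapping.single a 1) ` Ms (insert a S) j"
    then obtain m' where m': "m' \<in> Ms (insert a S) j" "m = m' + Poly_Mapping.single a 1" by auto
    have "pkeys m \<subseteq> insert a S" using m' keys_add[of m' "Poly_Mapping.single a 1"] by (auto simp: Ms_def)
    moreover have "mdeg m = Suc j" using m' by (simp add: mdeg_add Ms_def)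
    ultimately show ?thesis by (simp add: Ms_def)
  qed
qed

lemma Hs_insert_Suc:
  assumes "finite S" "a \<notin> S"
  shows "Hs (insert a S) (Suc j) = Hs S (Suc j) + mvar a * (Hs (insert a S) j :: 'a::comm_ring_1 mpoly)"
proof -
  let ?f = "\<lambda>m. m + Poly_Mapping.single a 1"
  have "a \<in> pkeys (m + Poly_Mapping.single a 1)" for m :: "nat \<Rightarrow>\<^sub>0 nat"
    by (simp add: in_keys_iff lookup_add)
  then have disj: "Ms S (Suc j) \<inter> ?f ` Ms (insert a S) j = {}"
    using assms(2) by (auto simp: Ms_def)
  have inj: "inj_on ?f (Ms (insert a S) j)" by (auto intro: inj_onI)
  have "Hs (insert a S) (Suc j) = (\<Sum>m\<in>Ms S (Suc j). mon m) + (\<Sum>m\<in>?f ` Ms (insert a S) j. mon m :: 'a mpoly)"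
    unfolding Hs_def Ms_insert_Suc[OF assms(2)]
    using assms finite_Ms disj by (intro sum.union_disjoint) auto
  also have "(\<Sum>m\<in>?f ` Ms (insert a S) j. mon m :: 'a mpoly) = (\<Sum>m\<in>Ms (insert a S) j. mon (?f m))"
    using inj by (simp add: sum.reindex)
  also have "\<dots> = mvar a * Hs (insert a S) j"
    by (simp add: Hs_def sum_distrib_left mvar_def mult_single add.commute)
  finally show ?thesis by (simp add: Hs_def)
qed

lemma Hs_diff:
  assumes "finite T" "a \<notin> T" "b \<notin> T" "a \<noteq> b"
  shows "(mvar a - mvar b) * (Hs (insert a (insert b T)) j :: 'a::comm_ring_1 mpoly)
     = Hs (insert a T) (Suc j) - Hs (insert b T) (Suc j)"
proof -
  have 1: "Hs (insert a (insert b T)) (Suc j) = Hs (insert b T) (Suc j) + mvar a * (Hs (insert a (insert b T)) j :: 'a mpoly)"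
    using assms by (intro Hs_insert_Suc) auto
  have 2: "Hs (insert b (insert a T)) (Suc j) = Hs (insert a T) (Suc j) + mvar b * (Hs (insert b (insert a T)) j :: 'a mpoly)"
    using assms by (intro Hs_insert_Suc) auto
  have e: "insert b (insert a T) = insert a (insert b T)" by auto
  from 1 2 show ?thesis unfolding e by (simp add: algebra_simps)
qed

lemma lk_Hs: "finite S \<Longrightarrow> lk (Hs S j) m = (if m \<in> Ms S j then 1 else 0)"
  by (simp add: Hs_def lookup_sum lookup_single finite_Ms when_def)

lemma keys_Hs: "pkeys (Hs S j) \<subseteq> Ms S j"
  unfolding Hs_def using keys_sum[of mon "Ms S j"] by auto

lemma Hs_single: "Hs {a} j = mvar a ^ j"
proof (induction j)
  case (Suc j)
  have "Hs (insert a {}) (Suc j) = Hs {} (Suc j) + mvar a * (Hs (insert a {}) j :: 'a mpoly)"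
    by (rule Hs_insert_Suc) auto
  then show ?case using Suc by simp
qed simp

definition GS :: "'a::comm_ring_1 poly \<Rightarrow> nat set \<Rightarrow> 'a mpoly" where
  "GS f S = (\<Sum>k\<in>{card S - 1..degree f}. mconst (coeff f k) * Hs S (k - (card S - 1)))"

lemma herm_g_GS: "herm_g f i = GS f {..<i}"
  by (simp add: herm_g_def GS_def complete_hom_Hs)

lemma GS_single: "GS f {a} = upoly_at f a"
  by (simp add: GS_def upoly_at_def Hs_single atLeast0AtMost)

lemma GS_diff:
  assumes "finite T" "a \<notin> T" "b \<notin> T" "a \<noteq> b"
  shows "(mvar a - mvar b) * GS f (insert a (insert b T)) = GS f (insert a T) - GS f (insert b T)"
proof -
  let ?c = "card T" and ?d = "degree f"
  have cU: "card (insert a (insert b T)) = ?c + 2" using assms by simp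
  have ca: "card (insert a T) = ?c + 1" and cb: "card (insert b T) = ?c + 1" using assms by simp_all
  have "(mvar a - mvar b) * GS f (insert a (insert b T))
      = (\<Sum>k\<in>{?c+1..?d}. mconst (coeff f k) * (Hs (insert a T) (Suc (k - (?c + 1))) - Hs (insert b T) (Suc (k - (?c + 1)))))"
    unfolding GS_def cU using assms
    by (simp add: sum_distrib_left Hs_diff[symmetric] ac_simps)
  also have "\<dots> = (\<Sum>k\<in>{?c+1..?d}. mconst (coeff f k) * (Hs (insert a T) (k - ?c) - Hs (insert b T) (k - ?c)))"
    by (intro sum.cong refl) (auto simp: Suc_diff_Suc)
  also have "\<dots> = (\<Sum>k\<in>{?c..?d}. mconst (coeff f k) * (Hs (insert a T) (k - ?c) - Hs (insert b T) (k - ?c)))"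
  proof (cases "?c \<le> ?d")
    case True
    then have "{?c..?d} = insert ?c {?c+1..?d}" by auto
    then show ?thesis by simp
  next
    case False
    then show ?thesis by simp
  qed
  also have "\<dots> = GS f (insert a T) - GS f (insert b T)"
    unfolding GS_def ca cb by (simp add: sum_subtractf algebra_simps)
  finally show ?thesis .
qed


definition ren :: "(nat \<Rightarrow> nat) \<Rightarrow> (nat \<Rightarrow>\<^sub>0 nat) \<Rightarrow> (nat \<Rightarrow>\<^sub>0 nat)" where
  "ren \<sigma> m = (\<Sum>i\<in>pkeys m. Poly_Mapping.single (\<sigma> i) (lk m i))"

lemma ren_add: "ren \<sigma> (m1 + m2) = ren \<sigma> m1 + ren \<sigma> m2"
  unfolding ren_def by (rule setsum_keys_plus_distrib) (auto simp: single_add)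

lemma ren_0[simp]: "ren \<sigma> 0 = 0" by (simp add: ren_def)

lemma ren_single: "ren \<sigma> (Poly_Mapping.single i a) = Poly_Mapping.single (\<sigma> i) a"
  by (cases "a = 0") (auto simp: ren_def)

lemma prod_mon: "(\<Prod>i\<in>A. mon (g i)) = (mon (\<Sum>i\<in>A. g i) :: 'a::comm_ring_1 mpoly)"
  by (induction A rule: infinite_finite_induct) (auto simp: mult_single)

lemma mrename_lin: "mrename \<sigma> p = lin (\<lambda>m. mon (ren \<sigma> m)) p"
  unfolding mrename_def lin_def ren_def by (simp add: mvar_power prod_mon)

lemma mrename_add: "mrename \<sigma> (p + q) = mrename \<sigma> p + mrename \<sigma> q"
  by (simp add: mrename_lin lin_add)

lemma mrename_zero[simp]: "mrename \<sigma> 0 = 0"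
  by (simp add: mrename_lin)

lemma mrename_uminus: "mrename \<sigma> (- p) = - mrename \<sigma> p"
  by (simp add: mrename_lin lin_uminus)

lemma mrename_diff: "mrename \<sigma> (p - q) = mrename \<sigma> p - mrename \<sigma> q"
  by (simp add: mrename_lin lin_diff)

lemma mrename_sum: "mrename \<sigma> (sum f A) = (\<Sum>a\<in>A. mrename \<sigma> (f a))"
  by (simp add: mrename_lin lin_sum)

lemma mrename_single: "mrename \<sigma> (Poly_Mapping.single m c) = Poly_Mapping.single (ren \<sigma> m) c"
  by (simp add: mrename_lin lin_single mconst_mult_single)

lemma mrename_mult: "mrename \<sigma> (p * q) = mrename \<sigma> p * mrename \<sigma> q"
proof -
  have single_case: "mrename \<sigma> (Poly_Mapping.single m c * q) = mrename \<sigma> (Poly_Mapping.single m c) * mrename \<sigma> q" for m c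
    by (rule additive_eqI[of "\<lambda>q. mrename \<sigma> (Poly_Mapping.single m c * q)"
            "\<lambda>q. mrename \<sigma> (Poly_Mapping.single m c) * mrename \<sigma> q"])
       (auto simp: mrename_add distrib_left mrename_single mult_single ren_add)
  show ?thesis
    by (rule additive_eqI[of "\<lambda>p. mrename \<sigma> (p * q)" "\<lambda>p. mrename \<sigma> p * mrename \<sigma> q"])
       (auto simp: mrename_add distrib_right single_case)
qed

lemma mrename_mconst[simp]: "mrename \<sigma> (mconst c) = mconst c"
  by (simp add: mconst_def mrename_single)

lemma mrename_one[simp]: "mrename \<sigma> 1 = 1"
  using mrename_mconst[of \<sigma> 1] by simp

lemma mrename_mvar[simp]: "mrename \<sigma> (mvar i) = mvar (\<sigma> i)"
  by (simp add: mvar_def mrename_single ren_single)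

lemma mrename_power: "mrename \<sigma> (p ^ j) = mrename \<sigma> p ^ j"
  by (induction j) (auto simp: mrename_mult)

lemma mrename_prod: "mrename \<sigma> (prod f A) = (\<Prod>a\<in>A. mrename \<sigma> (f a))"
  by (induction A rule: infinite_finite_induct) (auto simp: mrename_mult)

section \<open>Involutions\<close>

locale invol =
  fixes \<sigma> :: "nat \<Rightarrow> nat"
  assumes invol: "\<And>i. \<sigma> (\<sigma> i) = i"
begin

lemma inj: "inj \<sigma>" by (metis injI invol)

lemma lk_ren: "lk (ren \<sigma> m) l = lk m (\<sigma> l)"
proof -
  have "lk (ren \<sigma> m) l = (\<Sum>i\<in>pkeys m. if i = \<sigma> l then lk m i else 0)"
    unfolding ren_def lookup_sum by (intro sum.cong refl) (auto simp: lookup_single invol when_def)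
  also have "\<dots> = lk m (\<sigma> l)" by (auto simp: in_keys_iff)
  finally show ?thesis .
qed

lemma ren_ren[simp]: "ren \<sigma> (ren \<sigma> m) = m"
  by (rule poly_mapping_eqI) (simp add: lk_ren invol)

lemma inj_ren: "inj (ren \<sigma>)"
  by (metis injI ren_ren)

lemma keys_ren: "pkeys (ren \<sigma> m) = \<sigma> ` pkeys m"
proof (intro equalityI subsetI)
  fix l assume "l \<in> pkeys (ren \<sigma> m)"
  then have "\<sigma> l \<in> pkeys m" by (simp add: in_keys_iff lk_ren)
  then show "l \<in> \<sigma> ` pkeys m" by (metis invol rev_image_eqI)
qed (auto simp: in_keys_iff lk_ren invol)

lemma mdeg_ren: "mdeg (ren \<sigma> m) = mdeg m"
proof -
  have "mdeg (ren \<sigma> m) = (\<Sum>l\<in>\<sigma> ` pkeys m. lk m (\<sigma> l))"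
    by (simp add: mdeg_def keys_ren lk_ren)
  also have "\<dots> = (\<Sum>i\<in>pkeys m. lk m (\<sigma> (\<sigma> i)))"
    using inj by (simp add: sum.reindex inj_on_def)
  finally show ?thesis by (simp add: invol mdeg_def)
qed

lemma lk_mrename: "lk (mrename \<sigma> p) m = lk p (ren \<sigma> m)"
proof -
  have "lk (mrename \<sigma> p) m = (\<Sum>x\<in>pkeys p. if x = ren \<sigma> m then lk p x else 0)"
    unfolding mrename_lin lin_def lookup_sum mconst_mult_single
    by (intro sum.cong refl) (auto simp: lookup_single when_def)
  also have "\<dots> = lk p (ren \<sigma> m)" by (auto simp: in_keys_iff)
  finally show ?thesis .
qed

lemma keys_mrename: "pkeys (mrename \<sigma> p) = ren \<sigma> ` pkeys p"
proof (intro equalityI subsetI)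
  fix l assume "l \<in> pkeys (mrename \<sigma> p)"
  then have "ren \<sigma> l \<in> pkeys p" by (simp add: in_keys_iff lk_mrename)
  then show "l \<in> ren \<sigma> ` pkeys p" by (metis ren_ren rev_image_eqI)
qed (auto simp: in_keys_iff lk_mrename)

lemma ren_Ms: "ren \<sigma> ` Ms S j = Ms (\<sigma> ` S) j"
proof -
  have sub: "ren \<sigma> ` Ms S j \<subseteq> Ms (\<sigma> ` S) j" for S
    by (auto simp: Ms_def keys_ren mdeg_ren) blast
  have "Ms (\<sigma> ` S) j = ren \<sigma> ` ren \<sigma> ` Ms (\<sigma> ` S) j" by (simp add: image_image)
  also have "\<dots> \<subseteq> ren \<sigma> ` Ms (\<sigma> ` \<sigma> ` S) j" using sub by blast
  also have "\<sigma> ` \<sigma> ` S = S" by (simp add: image_image invol)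
  finally show ?thesis using sub by blast
qed

lemma mrename_Hs: "mrename \<sigma> (Hs S j) = Hs (\<sigma> ` S) j"
proof -
  have "mrename \<sigma> (Hs S j) = (\<Sum>m\<in>Ms S j. mon (ren \<sigma> m))"
    by (simp add: Hs_def mrename_sum mrename_single)
  also have "\<dots> = (\<Sum>m\<in>ren \<sigma> ` Ms S j. mon m)"
    using inj_ren by (simp add: sum.reindex inj_on_def)
  finally show ?thesis by (simp add: Hs_def ren_Ms)
qed

lemma mrename_GS: "mrename \<sigma> (GS f S) = GS f (\<sigma> ` S)"
proof -
  have "card (\<sigma> ` S) = card S" using inj by (simp add: card_image inj_on_def)
  then show ?thesis
    by (simp add: GS_def mrename_sum mrename_mult mrename_Hs)
qed

lemma mrename_mrename[simp]: "mrename \<sigma> (mrename \<sigma> p) = p"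
  by (rule poly_mapping_eqI) (simp add: lk_mrename)

end


definition tau :: "nat \<Rightarrow> nat \<Rightarrow> nat" where
  "tau k i = (if i = k then Suc k else if i = Suc k then k else i)"

interpretation tau: invol "tau k"
  by unfold_locales (simp add: tau_def)

definition mrest :: "nat \<Rightarrow> (nat \<Rightarrow>\<^sub>0 nat) \<Rightarrow> (nat \<Rightarrow>\<^sub>0 nat)" where
  "mrest k m = m - Poly_Mapping.single k (lk m k) - Poly_Mapping.single (Suc k) (lk m (Suc k))"

lemma lk_mrest: "lk (mrest k m) l = (if l = k \<or> l = Suc k then 0 else lk m l)"
  by (auto simp: mrest_def lk_minus_nat lookup_single when_def)

definition mk3 :: "nat \<Rightarrow> (nat \<Rightarrow>\<^sub>0 nat) \<Rightarrow> nat \<Rightarrow> nat \<Rightarrow> (nat \<Rightarrow>\<^sub>0 nat)" where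
  "mk3 k m \<alpha> \<beta> = mrest k m + Poly_Mapping.single k \<alpha> + Poly_Mapping.single (Suc k) \<beta>"

lemma lk_mk3: "lk (mk3 k m \<alpha> \<beta>) l = (if l = k then \<alpha> else if l = Suc k then \<beta> else lk m l)"
  by (auto simp: mk3_def lookup_add lk_mrest lookup_single when_def)

lemma mk3_self: "mk3 k m (lk m k) (lk m (Suc k)) = m"
  by (rule poly_mapping_eqI) (simp add: lk_mk3)

lemma mk3_swap: "mk3 k m (lk m (Suc k)) (lk m k) = ren (tau k) m"
  by (rule poly_mapping_eqI) (simp add: lk_mk3 tau.lk_ren tau_def)

lemma mon_mk3: "(mon (mk3 k m \<alpha> \<beta>) :: 'a::comm_ring_1 mpoly) = mon (mrest k m) * mvar k ^ \<alpha> * mvar (Suc k) ^ \<beta>"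
  by (simp add: mk3_def mvar_power mult_single)

definition Dm :: "nat \<Rightarrow> (nat \<Rightarrow>\<^sub>0 nat) \<Rightarrow> 'a::comm_ring_1 mpoly" where
  "Dm k m = (let a = lk m k; b = lk m (Suc k); c = (if a \<le> b then b - a else a - b) in
     (if a \<le> b then 1 else -1) * (\<Sum>i<c. mon (mk3 k m (min a b + (c - Suc i)) (min a b + i))))"

lemma Dm_eq: "(mvar (Suc k) - mvar k) * (Dm k m :: 'a::comm_ring_1 mpoly) = mon m - mon (ren (tau k) m)"
proof -
  define a where "a = lk m k"
  define b where "b = lk m (Suc k)"
  define X where "X = (mvar k :: 'a mpoly)"
  define Y where "Y = (mvar (Suc k) :: 'a mpoly)"
  define M where "M = (mon (mrest k m) :: 'a mpoly)"
  have e1: "mon m = M * X ^ a * Y ^ b"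
    using mon_mk3[of k m a b] by (simp add: a_def b_def M_def X_def Y_def mk3_self)
  have e2: "mon (ren (tau k) m) = M * X ^ b * Y ^ a"
    using mon_mk3[of k m b a] by (simp add: a_def b_def M_def X_def Y_def mk3_swap)
  have lhs: "mon m - mon (ren (tau k) m) = M * X ^ a * Y ^ b - M * X ^ b * Y ^ a"
    by (simp only: e1 e2)
  show ?thesis
  proof (cases "a \<le> b")
    case True
    then obtain c where c: "b = a + c" using le_Suc_ex by blast
    have "Dm k m = (\<Sum>i<c. M * X ^ (a + (c - Suc i)) * Y ^ (a + i))"
      using True by (simp add: Dm_def Let_def a_def[symmetric] b_def[symmetric] c mon_mk3 M_def X_def Y_def)
    also have "\<dots> = (\<Sum>i<c. M * (X * Y) ^ a * (Y ^ i * X ^ (c - Suc i)))"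
      by (intro sum.cong refl) (simp only: power_add power_mult_distrib mult_ac)
    also have "\<dots> = M * (X * Y) ^ a * (\<Sum>i<c. Y ^ i * X ^ (c - Suc i))"
      by (simp add: sum_distrib_left)
    finally have "(Y - X) * Dm k m = M * (X * Y) ^ a * ((Y - X) * (\<Sum>i<c. Y ^ i * X ^ (c - Suc i)))"
      by (simp add: ac_simps)
    also have "(Y - X) * (\<Sum>i<c. Y ^ i * X ^ (c - Suc i)) = Y ^ c - X ^ c"
      using power_diff_sumr2[of Y c X] by (simp add: ac_simps)
    also have "M * (X * Y) ^ a * (Y ^ c - X ^ c) = M * X ^ a * Y ^ b - M * X ^ b * Y ^ a"
      by (simp add: c power_add power_mult_distrib algebra_simps)
    finally show ?thesis using lhs by (simp add: X_def Y_def)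
  next
    case False
    then obtain c where c: "a = b + c" using le_Suc_ex[of b a] by auto
    have "Dm k m = - (\<Sum>i<c. M * X ^ (b + (c - Suc i)) * Y ^ (b + i))"
      using False by (simp add: Dm_def Let_def a_def[symmetric] b_def[symmetric] c mon_mk3 M_def X_def Y_def)
    also have "\<dots> = - (\<Sum>i<c. M * (X * Y) ^ b * (Y ^ i * X ^ (c - Suc i)))"
      by (intro arg_cong[where f=uminus] sum.cong refl) (simp only: power_add power_mult_distrib mult_ac)
    also have "\<dots> = - (M * (X * Y) ^ b * (\<Sum>i<c. Y ^ i * X ^ (c - Suc i)))"
      by (simp add: sum_distrib_left)
    finally have "(Y - X) * Dm k m = - (M * (X * Y) ^ b * ((Y - X) * (\<Sum>i<c. Y ^ i * X ^ (c - Suc i))))"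
      by (simp add: ac_simps)
    also have "(Y - X) * (\<Sum>i<c. Y ^ i * X ^ (c - Suc i)) = Y ^ c - X ^ c"
      using power_diff_sumr2[of Y c X] by (simp add: ac_simps)
    also have "- (M * (X * Y) ^ b * (Y ^ c - X ^ c)) = M * X ^ a * Y ^ b - M * X ^ b * Y ^ a"
      by (simp add: c power_add power_mult_distrib algebra_simps)
    finally show ?thesis using lhs by (simp add: X_def Y_def)
  qed
qed

lemma keys_Dm: "pkeys (Dm k m) \<subseteq> {mk3 k m \<alpha> \<beta> | \<alpha> \<beta>. \<alpha> < max (lk m k) (lk m (Suc k)) \<and> \<beta> < max (lk m k) (lk m (Suc k))}"
proof -
  define a where "a = lk m k"
  define b where "b = lk m (Suc k)"
  define c where "c = (if a \<le> b then b - a else a - b)"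
  have "pkeys (\<Sum>i<c. mon (mk3 k m (min a b + (c - Suc i)) (min a b + i)) :: 'a mpoly)
       \<subseteq> (\<Union>i<c. pkeys (mon (mk3 k m (min a b + (c - Suc i)) (min a b + i)) :: 'a mpoly))"
    by (rule keys_sum)
  also have "\<dots> \<subseteq> {mk3 k m \<alpha> \<beta> | \<alpha> \<beta>. \<alpha> < max a b \<and> \<beta> < max a b}"
    by (auto simp: c_def split: if_splits intro!: exI)
  finally have *: "pkeys (\<Sum>i<c. mon (mk3 k m (min a b + (c - Suc i)) (min a b + i)) :: 'a mpoly)
       \<subseteq> {mk3 k m \<alpha> \<beta> | \<alpha> \<beta>. \<alpha> < max a b \<and> \<beta> < max a b}" .
  show ?thesis
    using * unfolding Dm_def Let_def a_def[symmetric] b_def[symmetric] c_def[symmetric]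
    by (auto simp: a_def b_def)
qed

definition dd :: "nat \<Rightarrow> 'a::comm_ring_1 mpoly \<Rightarrow> 'a mpoly" where
  "dd k p = lin (Dm k) p"

lemma lin_diff_fun: "lin (\<lambda>m. f m - g m) p = lin f p - lin g p"
  by (simp add: lin_def right_diff_distrib sum_subtractf)

lemma dd_eq: "(mvar (Suc k) - mvar k) * dd k p = p - mrename (tau k) p"
proof -
  have "(mvar (Suc k) - mvar k) * dd k p = lin (\<lambda>m. mon m - mon (ren (tau k) m)) p"
    by (simp add: dd_def lin_mult_left Dm_eq)
  also have "\<dots> = p - mrename (tau k) p"
    by (simp add: lin_diff_fun lin_mon mrename_lin)
  finally show ?thesis .
qed

lemma YX_nz: "(mvar (Suc k) - mvar k :: 'a::comm_ring_1 mpoly) \<noteq> 0"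
proof
  assume "(mvar (Suc k) - mvar k :: 'a mpoly) = 0"
  then have "lk (mvar (Suc k) - mvar k :: 'a mpoly) (Poly_Mapping.single (Suc k) 1) = 0" by simp
  moreover have "Poly_Mapping.single k (1::nat) \<noteq> Poly_Mapping.single (Suc k) 1"
    by (metis lookup_single_eq lookup_single_not_eq n_not_Suc_n one_neq_zero)
  ultimately show False by (simp add: mvar_def lookup_minus lookup_single when_def)
qed

lemma dd_unique:
  fixes p w :: "'a::idom mpoly"
  assumes "(mvar (Suc k) - mvar k) * w = p - mrename (tau k) p"
  shows "w = dd k p"
  using assms dd_eq[of k p] YX_nz[of k] by (metis mult_left_cancel)

lemma dd_add: "dd k (p + q) = dd k p + dd k q" by (simp add: dd_def lin_add)
lemma dd_diff: "dd k (p - q) = dd k p - dd k q" by (simp add: dd_def lin_diff)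
lemma dd_zero[simp]: "dd k 0 = 0" by (simp add: dd_def)
lemma dd_sum: "dd k (sum f A) = (\<Sum>a\<in>A. dd k (f a))" by (simp add: dd_def lin_sum)

lemma dd_mult:
  fixes p q :: "'a::idom mpoly"
  shows "dd k (p * q) = dd k p * q + mrename (tau k) p * dd k q"
proof (rule dd_unique[symmetric])
  show "(mvar (Suc k) - mvar k) * (dd k p * q + mrename (tau k) p * dd k q) = p * q - mrename (tau k) (p * q)"
  proof -
    let ?D = "mvar (Suc k) - mvar k :: 'a mpoly" and ?t = "mrename (tau k)"
    have "?D * (dd k p * q + ?t p * dd k q) = (?D * dd k p) * q + ?t p * (?D * dd k q)"
      by (simp add: algebra_simps)
    also have "\<dots> = (p - ?t p) * q + ?t p * (q - ?t q)" by (simp only: dd_eq)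
    also have "\<dots> = p * q - ?t p * ?t q" by (simp add: algebra_simps)
    also have "\<dots> = p * q - ?t (p * q)" by (simp add: mrename_mult)
    finally show ?thesis .
  qed
qed

lemma dd_invariant:
  fixes p :: "'a::idom mpoly"
  assumes "mrename (tau k) p = p"
  shows "dd k p = 0"
  using dd_unique[of k 0 p] assms by simp

lemma dd_zero_imp:
  fixes p :: "'a::idom mpoly"
  assumes "dd k p = 0"
  shows "mrename (tau k) p = p"
  using dd_eq[of k p] assms by simp

lemma keys_dd: "pkeys (dd k (p::'a::comm_ring_1 mpoly)) \<subseteq> (\<Union>m\<in>pkeys p. pkeys (Dm k m :: 'a mpoly))"
  unfolding dd_def by (rule keys_lin)


definition filt :: "((nat \<Rightarrow>\<^sub>0 nat) \<Rightarrow> bool) \<Rightarrow> 'a::comm_ring_1 mpoly \<Rightarrow> 'a mpoly" where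
  "filt P p = Poly_Mapping.mapp (\<lambda>m c. if P m then c else 0) p"

lemma lk_filt: "lk (filt P p) m = (if P m then lk p m else 0)"
  by (auto simp: filt_def lookup_mapp when_def in_keys_iff)

lemma keys_filt: "pkeys (filt P p) = {m\<in>pkeys p. P m}"
  by (auto simp: in_keys_iff lk_filt split: if_splits)

definition monic_in :: "nat \<Rightarrow> nat \<Rightarrow> 'a::comm_ring_1 mpoly \<Rightarrow> bool" where
  "monic_in k e t \<longleftrightarrow> lk t (Poly_Mapping.single k e) = 1 \<and>
     (\<forall>m\<in>pkeys t. lk m k \<le> e \<and> (lk m k = e \<longrightarrow> m = Poly_Mapping.single k e))"

lemma keys_mult_sub: "m \<in> pkeys (p * q) \<Longrightarrow> \<exists>a b. m = a + b \<and> a \<in> pkeys p \<and> b \<in> pkeys q"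
  using keys_mult[of p q] by blast

lemma monic_lead_keys:
  assumes "monic_in k e t"
  shows "Poly_Mapping.single k e \<in> pkeys t"
  using assms by (simp add: monic_in_def in_keys_iff)

lemma monic_rest:
  assumes "monic_in k e (t::'a::comm_ring_1 mpoly)" "m \<in> pkeys (t - mon (Poly_Mapping.single k e))"
  shows "lk m k < e" "m \<in> pkeys t"
proof -
  have "lk (t - mon (Poly_Mapping.single k e)) m \<noteq> 0" using assms(2) by (simp add: in_keys_iff)
  then have ne: "m \<noteq> Poly_Mapping.single k e" and mt: "m \<in> pkeys t"
    using assms(1) by (auto simp: lookup_minus lookup_single monic_in_def in_keys_iff when_def split: if_splits)
  show "m \<in> pkeys t" by fact
  show "lk m k < e" using assms(1) ne mt unfolding monic_in_def by force
qed

lemma monic_nonvanish: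
  fixes Q t :: "'a::comm_ring_1 mpoly"
  assumes "monic_in k e t" "Q \<noteq> 0"
  shows "\<exists>m\<in>pkeys (Q * t). e \<le> lk m k"
proof -
  let ?L = "Poly_Mapping.single k e"
  define N where "N = Max ((\<lambda>m. lk m k) ` pkeys Q)"
  have fin: "finite ((\<lambda>m. lk m k) ` pkeys Q)" by simp
  have ne: "pkeys Q \<noteq> {}" using assms(2) by simp
  have "N \<in> (\<lambda>m. lk m k) ` pkeys Q" unfolding N_def using fin ne by (intro Max_in) auto
  then obtain m0 where m0: "m0 \<in> pkeys Q" "lk m0 k = N" by auto
  have leN: "m \<in> pkeys Q \<Longrightarrow> lk m k \<le> N" for m
    unfolding N_def using fin by (intro Max_ge) auto
  define Qt where "Qt = filt (\<lambda>m. lk m k = N) Q"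
  define Ql where "Ql = Q - Qt"
  have lQl: "m \<in> pkeys Ql \<Longrightarrow> lk m k < N" for m
  proof -
    assume "m \<in> pkeys Ql"
    then have "lk Q m - (if lk m k = N then lk Q m else 0) \<noteq> 0"
      by (simp add: Ql_def Qt_def in_keys_iff lookup_minus lk_filt)
    then have "lk m k \<noteq> N" "m \<in> pkeys Q" by (auto simp: in_keys_iff split: if_splits)
    then show ?thesis using leN[of m] by force
  qed
  have kQt: "m \<in> pkeys Qt \<Longrightarrow> lk m k = N" for m
    by (auto simp: Qt_def keys_filt)
  define T where "T = m0 + ?L"
  have TK: "lk T k = N + e" by (simp add: T_def lookup_add m0)
  have decomp: "Q * t = mon ?L * Qt + Qt * (t - mon ?L) + Ql * t"
    by (simp add: Ql_def algebra_simps)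
  have 1: "lk (mon ?L * Qt) T = lk Q m0"
    using lookup_mon_mult[of ?L Qt m0] by (simp add: T_def add.commute Qt_def lk_filt m0)
  have 2: "lk (Qt * (t - mon ?L)) T = 0"
  proof (rule ccontr)
    assume "lk (Qt * (t - mon ?L)) T \<noteq> 0"
    then obtain a b where ab: "T = a + b" "a \<in> pkeys Qt" "b \<in> pkeys (t - mon ?L)"
      using keys_mult_sub by (metis in_keys_iff)
    have "lk b k < e" using monic_rest(1)[OF assms(1) ab(3)] .
    then have "lk T k < N + e" using kQt[OF ab(2)] ab(1) by (simp add: lookup_add)
    then show False using TK by simp
  qed
  have 3: "lk (Ql * t) T = 0"
  proof (rule ccontr)
    assume "lk (Ql * t) T \<noteq> 0"
    then obtain a b where ab: "T = a + b" "a \<in> pkeys Ql" "b \<in> pkeys t"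
      using keys_mult_sub by (metis in_keys_iff)
    have "lk b k \<le> e" using assms(1) ab(3) by (simp add: monic_in_def)
    then have "lk T k < N + e" using lQl[OF ab(2)] ab(1) by (simp add: lookup_add)
    then show False using TK by simp
  qed
  have "lk (Q * t) T = lk Q m0" by (simp add: decomp lookup_add 1 2 3)
  then have "T \<in> pkeys (Q * t)" using m0(1) by (simp add: in_keys_iff)
  then show ?thesis using TK by force
qed

lemma monic_division:
  fixes t :: "'a::comm_ring_1 mpoly"
  assumes mon: "monic_in k e t"
    and clos: "\<And>m m2. m \<in> M \<Longrightarrow> m2 \<in> pkeys t \<Longrightarrow> e \<le> lk m k \<Longrightarrow> (m - Poly_Mapping.single k e) + m2 \<in> M"
    and pM: "pkeys p \<subseteq> M"
  shows "\<exists>a b. p = a * t + b \<and> pkeys b \<subseteq> M \<and> (\<forall>m\<in>pkeys b. lk m k < e)"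
proof -
  let ?L = "Poly_Mapping.single k e"
  have "\<forall>p. pkeys p \<subseteq> M \<longrightarrow> (\<forall>m\<in>pkeys p. lk m k < N) \<longrightarrow>
          (\<exists>a b. p = a * t + b \<and> pkeys b \<subseteq> M \<and> (\<forall>m\<in>pkeys b. lk m k < e))" for N
  proof (induction N)
    case 0
    then show ?case by (intro allI impI exI[of _ 0]) auto
  next
    case (Suc N)
    show ?case
    proof (intro allI impI)
      fix p :: "'a mpoly"
      assume pM: "pkeys p \<subseteq> M" and pN: "\<forall>m\<in>pkeys p. lk m k < Suc N"
      show "\<exists>a b. p = a * t + b \<and> pkeys b \<subseteq> M \<and> (\<forall>m\<in>pkeys b. lk m k < e)"
      proof (cases "N < e")
        case True
        then show ?thesis using pM pN by (intro exI[of _ 0] exI[of _ p]) auto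
      next
        case False
        define pt where "pt = filt (\<lambda>m. lk m k = N) p"
        define pl where "pl = p - pt"
        define q where "q = lin (\<lambda>m. mon (m - ?L)) pt"
        have kpt: "m \<in> pkeys pt \<Longrightarrow> lk m k = N \<and> m \<in> pkeys p" for m
          by (auto simp: pt_def keys_filt)
        have kpl: "m \<in> pkeys pl \<Longrightarrow> lk m k < N \<and> m \<in> pkeys p" for m
        proof -
          assume "m \<in> pkeys pl"
          then have "lk p m - (if lk m k = N then lk p m else 0) \<noteq> 0"
            by (simp add: pl_def pt_def in_keys_iff lookup_minus lk_filt)
          then have "lk m k \<noteq> N" "m \<in> pkeys p" by (auto simp: in_keys_iff split: if_splits)
          then show ?thesis using pN by force
        qed
        have "q * mon ?L = lin (\<lambda>m. mon ?L * mon (m - ?L)) pt"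
          by (simp add: q_def lin_mult_left[symmetric] mult.commute)
        also have "\<dots> = lin mon pt"
        proof (rule lin_cong)
          fix m assume "m \<in> pkeys pt"
          then have "lk m k = N" using kpt by blast
          then have "?L + (m - ?L) = m" using False
            by (intro poly_mapping_eqI) (auto simp: lookup_add lk_minus_nat lookup_single when_def)
          then show "mon ?L * mon (m - ?L) = (mon m :: 'a mpoly)" by (simp add: mult_single)
        qed
        finally have qL: "q * mon ?L = pt" by (simp add: lin_mon)
        define p' where "p' = pl - q * (t - mon ?L)"
        have pp': "p = q * t + p'"
          using qL by (simp add: p'_def pl_def algebra_simps)
        have kq: "a \<in> pkeys q \<Longrightarrow> \<exists>m\<in>pkeys pt. a = m - ?L" for a
          using keys_lin[of "\<lambda>m. mon (m - ?L)" pt] by (auto simp: q_def)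
        have kp': "pkeys p' \<subseteq> M \<and> (\<forall>m\<in>pkeys p'. lk m k < N)"
        proof (intro conjI ballI subsetI)
          fix x assume x: "x \<in> pkeys p'"
          have "x \<in> pkeys pl \<or> x \<in> pkeys (q * (t - mon ?L))"
            using x keys_diff[of pl "q * (t - mon ?L)"] by (auto simp: p'_def)
          then have "(x \<in> M) \<and> lk x k < N"
          proof
            assume "x \<in> pkeys pl" then show ?thesis using kpl pM by auto
          next
            assume "x \<in> pkeys (q * (t - mon ?L))"
            then obtain a b where ab: "x = a + b" "a \<in> pkeys q" "b \<in> pkeys (t - mon ?L)"
              using keys_mult_sub by blast
            obtain m where m: "m \<in> pkeys pt" "a = m - ?L" using kq ab(2) by blast
            have b: "lk b k < e" "b \<in> pkeys t" using monic_rest[OF mon ab(3)] by auto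
            have mk: "lk m k = N" "m \<in> pkeys p" using kpt m(1) by auto
            have "x \<in> M" using clos[of m b] mk pM b False ab m by auto
            moreover have "lk x k < N"
              using ab(1) m(2) mk b False by (simp add: lookup_add lk_minus_nat)
            ultimately show ?thesis by blast
          qed
          then show "x \<in> M" "lk x k < N" by auto
        qed
        then obtain a b where ab: "p' = a * t + b" "pkeys b \<subseteq> M" "\<forall>m\<in>pkeys b. lk m k < e"
          using Suc.IH by blast
        then show ?thesis using pp' by (intro exI[of _ "q + a"] exI[of _ b]) (simp add: algebra_simps)
      qed
    qed
  qed
  moreover have "\<forall>m\<in>pkeys p. lk m k < Suc (Max ((\<lambda>m. lk m k) ` pkeys p))"
    by (simp add: le_imp_less_Suc)
  ultimately show ?thesis using pM by blast
qed


definition tri :: "nat \<Rightarrow> (nat \<Rightarrow> 'a::comm_ring_1 mpoly) \<Rightarrow> (nat \<Rightarrow> nat) \<Rightarrow> bool" where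
  "tri n t e \<longleftrightarrow> (\<forall>k<n. monic_in k (e k) (t k) \<and> (\<forall>m\<in>pkeys (t k). pkeys m \<subseteq> {..k}))"

definition Idl :: "nat \<Rightarrow> (nat \<Rightarrow> 'a::comm_ring_1 mpoly) \<Rightarrow> 'a mpoly set" where
  "Idl n t = {p. \<exists>c. p = (\<Sum>k<n. c k * t k)}"

definition Red :: "nat \<Rightarrow> (nat \<Rightarrow> nat) \<Rightarrow> 'a::comm_ring_1 mpoly \<Rightarrow> bool" where
  "Red n e p \<longleftrightarrow> (\<forall>m\<in>pkeys p. pkeys m \<subseteq> {..<n} \<and> (\<forall>k<n. lk m k < e k))"

lemma Idl_0[simp]: "0 \<in> Idl n t"
  unfolding Idl_def by (auto intro!: exI[of _ "\<lambda>_. 0"])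

lemma Idl_add:
  assumes "p \<in> Idl n t" "q \<in> Idl n t" shows "p + q \<in> Idl n t"
proof -
  obtain c c' where "p = (\<Sum>k<n. c k * t k)" "q = (\<Sum>k<n. c' k * t k)" using assms by (auto simp: Idl_def)
  then have "p + q = (\<Sum>k<n. (c k + c' k) * t k)" by (simp add: sum.distrib distrib_right)
  then show ?thesis unfolding Idl_def mem_Collect_eq by (rule exI[where x="\<lambda>k. c k + c' k"])
qed

lemma Idl_mult:
  assumes "p \<in> Idl n t" shows "a * p \<in> Idl n t"
proof -
  obtain c where "p = (\<Sum>k<n. c k * t k)" using assms by (auto simp: Idl_def)
  then have "a * p = (\<Sum>k<n. (a * c k) * t k)" by (simp add: sum_distrib_left mult.assoc)
  then show ?thesis unfolding Idl_def mem_Collect_eq by (rule exI[where x="\<lambda>k. a * c k"])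
qed

lemma Idl_uminus: "p \<in> Idl n t \<Longrightarrow> - p \<in> Idl n t"
  using Idl_mult[of p n t "-1"] by simp

lemma Idl_diff: "p \<in> Idl n t \<Longrightarrow> q \<in> Idl n t \<Longrightarrow> p - q \<in> Idl n t"
  using Idl_add[of p n t "-q"] Idl_uminus[of q n t] by simp

lemma Idl_gen: assumes k: "k < n" shows "t k \<in> Idl n t"
proof -
  have "(\<Sum>j<n. (if j = k then 1 else 0) * t j) = (\<Sum>j<n. if j = k then t j else 0)"
    by (rule sum.cong) simp_all
  also have "\<dots> = t k" using k by simp
  finally have "t k = (\<Sum>j<n. (\<lambda>j. if j = k then 1 else 0) j * t j)" by simp
  then show ?thesis unfolding Idl_def mem_Collect_eq by (rule exI[where x="\<lambda>j. if j = k then 1 else 0"])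
qed

lemma Idl_sum: "(\<And>a. a \<in> A \<Longrightarrow> f a \<in> Idl n t) \<Longrightarrow> sum f A \<in> Idl n t"
  by (induction A rule: infinite_finite_induct) (auto intro: Idl_add)

lemma Idl_subset: "(\<And>k. k < n \<Longrightarrow> t k \<in> Idl n' t') \<Longrightarrow> p \<in> Idl n t \<Longrightarrow> p \<in> Idl n' t'"
  unfolding Idl_def[of n t] by (auto intro!: Idl_sum Idl_mult)

lemma tri_Suc: "tri (Suc n) t e \<Longrightarrow> tri n t e"
  by (simp add: tri_def)

lemma keys_mult_in: "m \<in> pkeys (p * q) \<Longrightarrow> (\<And>a b. a \<in> pkeys p \<Longrightarrow> b \<in> pkeys q \<Longrightarrow> P (a + b)) \<Longrightarrow> P m"
  using keys_mult_sub by blast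

definition clr :: "nat \<Rightarrow> (nat \<Rightarrow>\<^sub>0 nat) \<Rightarrow> (nat \<Rightarrow>\<^sub>0 nat)" where
  "clr n m = m - Poly_Mapping.single n (lk m n)"

lemma lk_clr: "lk (clr n m) l = (if l = n then 0 else lk m l)"
  by (simp add: clr_def lk_minus_nat lookup_single when_def)

definition cf :: "nat \<Rightarrow> nat \<Rightarrow> 'a::comm_ring_1 mpoly \<Rightarrow> 'a mpoly" where
  "cf n j p = lin (\<lambda>m. if lk m n = j then mon (clr n m) else 0) p"

lemma cf_add: "cf n j (p + q) = cf n j p + cf n j q" by (simp add: cf_def lin_add)
lemma cf_sum: "cf n j (sum f A) = (\<Sum>a\<in>A. cf n j (f a))" by (simp add: cf_def lin_sum)

lemma cf_single: "cf n j (Poly_Mapping.single m c) = (if lk m n = j then Poly_Mapping.single (clr n m) c else 0)"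
  by (simp add: cf_def lin_single mconst_mult_single)

lemma cf_mult_free:
  fixes s :: "'a::comm_ring_1 mpoly"
  assumes s: "\<forall>m\<in>pkeys s. lk m n = 0"
  shows "cf n j (b * s) = cf n j b * s"
proof -
  have sexp: "s = (\<Sum>m2\<in>pkeys s. Poly_Mapping.single m2 (lk s m2))"
    using lin_mon[of s] by (simp add: lin_def mconst_mult_single)
  have single_case: "cf n j (Poly_Mapping.single m c * s) = cf n j (Poly_Mapping.single m c) * s" for m c
  proof -
    have "cf n j (Poly_Mapping.single m c * s) = (\<Sum>m2\<in>pkeys s. cf n j (Poly_Mapping.single (m + m2) (c * lk s m2)))"
      by (subst sexp) (simp add: sum_distrib_left cf_sum mult_single)
    also have "\<dots> = (\<Sum>m2\<in>pkeys s. cf n j (Poly_Mapping.single m c) * Poly_Mapping.single m2 (lk s m2))"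
    proof (rule sum.cong[OF refl])
      fix m2 assume "m2 \<in> pkeys s"
      then have z: "lk m2 n = 0" using s by blast
      have "clr n (m + m2) = clr n m + m2"
        by (rule poly_mapping_eqI) (simp add: lk_clr lookup_add z)
      then show "cf n j (Poly_Mapping.single (m + m2) (c * lk s m2)) = cf n j (Poly_Mapping.single m c) * Poly_Mapping.single m2 (lk s m2)"
        by (simp add: cf_single lookup_add z mult_single)
    qed
    also have "\<dots> = cf n j (Poly_Mapping.single m c) * s"
      by (subst (2) sexp) (simp add: sum_distrib_left)
    finally show ?thesis .
  qed
  show ?thesis
  proof (rule additive_eqI[of "\<lambda>b. cf n j (b * s)" "\<lambda>b. cf n j b * s"])
    fix p q :: "'a mpoly"
    show "cf n j ((p + q) * s) = cf n j (p * s) + cf n j (q * s)" by (simp only: distrib_right cf_add)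
    show "cf n j (p + q) * s = cf n j p * s + cf n j q * s" by (simp only: distrib_right cf_add)
  next
    fix m c show "cf n j (Poly_Mapping.single m c * s) = cf n j (Poly_Mapping.single m c) * s"
      by (rule single_case)
  qed
qed

lemma lk_cf_clr:
  assumes "lk m n = j"
  shows "lk (cf n j p) (clr n m) = lk p m"
proof -
  have eq: "(lk m' n = j \<and> clr n m' = clr n m) \<longleftrightarrow> m' = m" for m'
  proof
    assume a: "lk m' n = j \<and> clr n m' = clr n m"
    show "m' = m"
    proof (rule poly_mapping_eqI)
      fix l
      have "lk (clr n m') l = lk (clr n m) l" using a by simp
      then have "(if l = n then 0 else lk m' l) = (if l = n then 0 else lk m l)" by (simp only: lk_clr)
      then show "lk m' l = lk m l"
        using a assms by (cases "l = n") auto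
    qed
  qed (use assms in auto)
  have "lk (cf n j p) (clr n m) = (\<Sum>m'\<in>pkeys p. if m' = m then lk p m' else 0)"
    unfolding cf_def lin_def lookup_sum
    by (intro sum.cong refl) (auto simp: mconst_mult_single lookup_single when_def eq[symmetric])
  also have "\<dots> = lk p m" by (auto simp: in_keys_iff)
  finally show ?thesis .
qed

lemma keys_cf: "pkeys (cf n j p) \<subseteq> clr n ` pkeys p"
  using keys_lin[of "\<lambda>m. if lk m n = j then mon (clr n m) else 0" p]
  unfolding cf_def by (auto split: if_splits)

theorem tri_unique:
  fixes t :: "nat \<Rightarrow> 'a::comm_ring_1 mpoly"
  assumes "tri n t e" "Red n e r" "r \<in> Idl n t"
  shows "r = 0"
  using assms
proof (induction n arbitrary: r)
  case 0
  then show ?case by (simp add: Idl_def)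
next
  case (Suc n)
  have trin: "tri n t e" using Suc.prems(1) by (rule tri_Suc)
  have monn: "monic_in n (e n) (t n)" using Suc.prems(1) by (simp add: tri_def)
  have tk_free: "\<forall>m\<in>pkeys (t k). lk m n = 0" if k: "k < n" for k
  proof
    fix m assume "m \<in> pkeys (t k)"
    then have "pkeys m \<subseteq> {..k}" using Suc.prems(1) k by (simp add: tri_def)
    then have "n \<notin> pkeys m" using k by auto
    then show "lk m n = 0" by (simp add: in_keys_iff)
  qed
  obtain c where c: "r = (\<Sum>k<Suc n. c k * t k)" using Suc.prems(3) by (auto simp: Idl_def)
  have "\<forall>k. \<exists>a b. c k = a * t n + b \<and> (\<forall>m\<in>pkeys b. lk m n < e n)"
  proof
    fix k
    show "\<exists>a b. c k = a * t n + b \<and> (\<forall>m\<in>pkeys b. lk m n < e n)"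
      using monic_division[OF monn, of UNIV "c k"] by auto
  qed
  then obtain a b where ab: "\<And>k. c k = a k * t n + b k" "\<And>k. \<forall>m\<in>pkeys (b k). lk m n < e n"
    by metis
  define Q where "Q = c n + (\<Sum>k<n. a k * t k)"
  define r' where "r' = (\<Sum>k<n. b k * t k)"
  have "(\<Sum>k<n. c k * t k) = (\<Sum>k<n. b k * t k + (a k * t k) * t n)"
    by (intro sum.cong refl) (simp add: ab(1) algebra_simps)
  also have "\<dots> = r' + (\<Sum>k<n. a k * t k) * t n"
    by (simp add: sum.distrib sum_distrib_right r'_def)
  finally have "r = r' + (\<Sum>k<n. a k * t k) * t n + c n * t n"
    by (simp add: c)
  then have rdec: "r = r' + Q * t n"
    by (simp add: Q_def algebra_simps)
  have kr': "m \<in> pkeys r' \<Longrightarrow> lk m n < e n" for m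
  proof -
    assume "m \<in> pkeys r'"
    moreover have "pkeys r' \<subseteq> (\<Union>k\<in>{..<n}. pkeys (b k * t k))" unfolding r'_def by (rule keys_sum)
    ultimately obtain k where k: "k < n" "m \<in> pkeys (b k * t k)" by blast
    obtain x y where xy: "m = x + y" "x \<in> pkeys (b k)" "y \<in> pkeys (t k)"
      using keys_mult_sub[OF k(2)] by blast
    have "lk y n = 0" using tk_free[OF k(1)] xy(3) by blast
    moreover have "lk x n < e n" using ab(2)[of k] xy(2) by blast
    ultimately show ?thesis using xy(1) by (simp add: lookup_add)
  qed
  have Q0: "Q = 0"
  proof (rule ccontr)
    assume "Q \<noteq> 0"
    then obtain m where m: "m \<in> pkeys (Q * t n)" "e n \<le> lk m n"
      using monic_nonvanish[OF monn] by blast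
    have "Q * t n = r - r'" using rdec by simp
    then have "m \<in> pkeys r \<or> m \<in> pkeys r'" using m(1) keys_diff[of r r'] by auto
    then show False
    proof
      assume "m \<in> pkeys r"
      then have "lk m n < e n" using Suc.prems(2) unfolding Red_def by blast
      then show False using m(2) by simp
    next
      assume "m \<in> pkeys r'"
      then show False using kr' m(2) by force
    qed
  qed
  have rr: "r = (\<Sum>k<n. b k * t k)" using rdec Q0 r'_def by simp
  have cf0: "cf n j r = 0" for j
  proof (rule Suc.IH[OF trin])
    have "cf n j r = (\<Sum>k<n. cf n j (b k) * t k)"
      unfolding rr cf_sum by (intro sum.cong refl) (simp add: cf_mult_free tk_free)
    then show "cf n j r \<in> Idl n t"
      unfolding Idl_def mem_Collect_eq by (rule exI[where x="\<lambda>k. cf n j (b k)"])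
    show "Red n e (cf n j r)"
      unfolding Red_def
    proof
      fix m assume "m \<in> pkeys (cf n j r)"
      then obtain m0 where m0: "m0 \<in> pkeys r" "m = clr n m0" using keys_cf by blast
      have h1: "pkeys m0 \<subseteq> {..<Suc n}" and h2: "\<forall>k<Suc n. lk m0 k < e k"
        using m0(1) Suc.prems(2) unfolding Red_def by blast+
      have "pkeys m \<subseteq> {..<n}"
      proof
        fix l assume "l \<in> pkeys m"
        then have "l \<noteq> n" "lk m0 l \<noteq> 0" using m0(2) by (auto simp: in_keys_iff lk_clr split: if_splits)
        then have "l \<in> pkeys m0" by (simp add: in_keys_iff)
        then have "l < Suc n" using h1 by auto
        then show "l \<in> {..<n}" using \<open>l \<noteq> n\<close> by simp
      qed
      moreover have "\<forall>k<n. lk m k < e k" using h2 m0(2) by (simp add: lk_clr)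
      ultimately show "pkeys m \<subseteq> {..<n} \<and> (\<forall>k<n. lk m k < e k)" by blast
    qed
  qed
  show "r = 0"
  proof (rule ccontr)
    assume "r \<noteq> 0"
    then obtain m where "m \<in> pkeys r" by fastforce
    then have "lk (cf n (lk m n) r) (clr n m) \<noteq> 0" by (simp add: lk_cf_clr in_keys_iff)
    then show False using cf0 by simp
  qed
qed


lemma lex_less_asym: "lex_less a b \<Longrightarrow> lex_less b a \<Longrightarrow> False"
  unfolding lex_less_def by (metis less_asym linorder_neqE_nat)

lemma lead_mono_eq:
  assumes "monic_in k e t" "\<forall>m\<in>pkeys t. pkeys m \<subseteq> {..k}"
  shows "lead_mono t = Poly_Mapping.single k e"
  unfolding lead_mono_def
proof (rule the_equality)
  let ?L = "Poly_Mapping.single k e"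
  have Lk: "?L \<in> pkeys t" using monic_lead_keys[OF assms(1)] .
  have lexL: "lex_less m' ?L" if "m' \<in> pkeys t" "m' \<noteq> ?L" for m'
  proof -
    have "lk m' k \<le> e" "lk m' k = e \<longrightarrow> m' = ?L" using assms(1) that(1) by (auto simp: monic_in_def)
    then have "lk m' k < lk ?L k" using that(2) by simp
    moreover have "\<forall>j>k. lk m' j = lk ?L j"
    proof (intro allI impI)
      fix j assume "j > k"
      then have "j \<notin> pkeys m'" using assms(2) that(1) by fastforce
      then show "lk m' j = lk ?L j" using \<open>j > k\<close> by (simp add: in_keys_iff lookup_single)
    qed
    ultimately show ?thesis unfolding lex_less_def by blast
  qed
  show "?L \<in> pkeys t \<and> (\<forall>m'\<in>pkeys t. m' \<noteq> ?L \<longrightarrow> lex_less m' ?L)" using Lk lexL by blast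
  fix m assume m: "m \<in> pkeys t \<and> (\<forall>m'\<in>pkeys t. m' \<noteq> m \<longrightarrow> lex_less m' m)"
  show "m = ?L"
  proof (rule ccontr)
    assume ne: "m \<noteq> ?L"
    then have "?L \<noteq> m" by simp
    then have "lex_less ?L m" using m Lk by blast
    moreover have "lex_less m ?L" using lexL m ne by blast
    ultimately show False by (rule lex_less_asym)
  qed
qed

lemma mono_dvd_single: "mono_dvd (Poly_Mapping.single k e) m \<longleftrightarrow> e \<le> lk m k"
  unfolding mono_dvd_def by (auto simp: lookup_single when_def)

lemma mideal_Idl:
  assumes "inj_on t {..<n}"
  shows "mideal (t ` {..<n}) = Idl n t"
proof (intro equalityI subsetI)
  fix p assume "p \<in> mideal (t ` {..<n})"
  then obtain c where c: "p = (\<Sum>g\<in>t ` {..<n}. c g * g)" by (auto simp: mideal_def)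
  also have "\<dots> = (\<Sum>k<n. c (t k) * t k)" using assms by (simp add: sum.reindex)
  finally show "p \<in> Idl n t" unfolding Idl_def mem_Collect_eq by (rule exI[where x="\<lambda>k. c (t k)"])
next
  fix p assume "p \<in> Idl n t"
  then obtain c where c: "p = (\<Sum>k<n. c k * t k)" by (auto simp: Idl_def)
  define c' where "c' g = c (the_inv_into {..<n} t g)" for g
  have "(\<Sum>g\<in>t ` {..<n}. c' g * g) = (\<Sum>k<n. c' (t k) * t k)" using assms by (simp add: sum.reindex)
  also have "\<dots> = p" unfolding c c'_def using assms by (intro sum.cong refl) (simp add: the_inv_into_f_f)
  finally show "p \<in> mideal (t ` {..<n})" unfolding mideal_def by blast
qed

theorem tri_exists:
  fixes t :: "nat \<Rightarrow> 'a::comm_ring_1 mpoly"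
  assumes tri: "tri n t e" and p: "\<forall>m\<in>pkeys p. pkeys m \<subseteq> {..<n}"
  shows "\<exists>r. Red n e r \<and> p - r \<in> Idl n t"
proof -
  have "i \<le> n \<Longrightarrow> \<exists>r. p - r \<in> Idl n t \<and> (\<forall>m\<in>pkeys r. pkeys m \<subseteq> {..<n} \<and> (\<forall>j. n - i \<le> j \<longrightarrow> j < n \<longrightarrow> lk m j < e j))" for i
  proof (induction i)
    case 0
    show ?case using p by (intro exI[of _ p]) auto
  next
    case (Suc i)
    define k where "k = n - Suc i"
    have kn: "k < n" and nik: "n - i = Suc k" using Suc.prems by (auto simp: k_def)
    obtain r where r: "p - r \<in> Idl n t" "\<forall>m\<in>pkeys r. pkeys m \<subseteq> {..<n} \<and> (\<forall>j. n - i \<le> j \<longrightarrow> j < n \<longrightarrow> lk m j < e j)"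
      using Suc.IH Suc.prems by auto
    define M where "M = {m. pkeys m \<subseteq> {..<n} \<and> (\<forall>j. k < j \<longrightarrow> j < n \<longrightarrow> lk m j < e j)}"
    have monk: "monic_in k (e k) (t k)" and tk: "\<forall>m\<in>pkeys (t k). pkeys m \<subseteq> {..k}"
      using tri kn by (auto simp: tri_def)
    have clos: "(m - Poly_Mapping.single k (e k)) + m2 \<in> M" if "m \<in> M" "m2 \<in> pkeys (t k)" for m m2
    proof -
      have m2k: "pkeys m2 \<subseteq> {..k}" using tk that(2) by blast
      have z: "j > k \<Longrightarrow> lk m2 j = 0" for j using m2k by (auto simp: in_keys_iff)
      have "pkeys ((m - Poly_Mapping.single k (e k)) + m2) \<subseteq> {..<n}"
      proof
        fix l assume "l \<in> pkeys ((m - Poly_Mapping.single k (e k)) + m2)"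
        then have "lk m l \<noteq> 0 \<or> lk m2 l \<noteq> 0" by (auto simp: in_keys_iff lookup_add lk_minus_nat)
        then have "l \<in> pkeys m \<or> l \<in> pkeys m2" by (simp add: in_keys_iff)
        then show "l \<in> {..<n}" using that(1) m2k kn unfolding M_def by auto
      qed
      moreover have "\<forall>j. k < j \<longrightarrow> j < n \<longrightarrow> lk ((m - Poly_Mapping.single k (e k)) + m2) j < e j"
        using that(1) z by (auto simp: M_def lookup_add lk_minus_nat lookup_single)
      ultimately show ?thesis by (simp add: M_def)
    qed
    have rM: "pkeys r \<subseteq> M" using r(2) nik by (auto simp: M_def)
    obtain a b where ab: "r = a * t k + b" "pkeys b \<subseteq> M" "\<forall>m\<in>pkeys b. lk m k < e k"
      using monic_division[OF monk, of M r] clos rM by blast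
    have "p - b = (p - r) + a * t k" using ab(1) by simp
    then have "p - b \<in> Idl n t" using r(1) Idl_add Idl_mult Idl_gen[OF kn] by metis
    moreover have "\<forall>m\<in>pkeys b. pkeys m \<subseteq> {..<n} \<and> (\<forall>j. n - Suc i \<le> j \<longrightarrow> j < n \<longrightarrow> lk m j < e j)"
    proof
      fix m assume m: "m \<in> pkeys b"
      then have "m \<in> M" using ab(2) by blast
      then show "pkeys m \<subseteq> {..<n} \<and> (\<forall>j. n - Suc i \<le> j \<longrightarrow> j < n \<longrightarrow> lk m j < e j)"
        using ab(3) m by (auto simp: M_def k_def) (metis le_neq_implies_less)
    qed
    ultimately show ?case by blast
  qed
  from this[of n] show ?thesis by (auto simp: Red_def)
qed

lemma Red_iff:
  assumes "tri n t e"
  shows "(mvars r \<subseteq> {..<n} \<and> (\<forall>m\<in>pkeys r. \<forall>g\<in>t ` {..<n}. \<not> mono_dvd (lead_mono g) m)) \<longleftrightarrow> Red n e r"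
proof -
  have lm: "k < n \<Longrightarrow> lead_mono (t k) = Poly_Mapping.single k (e k)" for k
    using assms by (intro lead_mono_eq) (auto simp: tri_def)
  have "mvars r \<subseteq> {..<n} \<longleftrightarrow> (\<forall>m\<in>pkeys r. pkeys m \<subseteq> {..<n})" by (auto simp: mvars_def)
  moreover have "(\<forall>m\<in>pkeys r. \<forall>g\<in>t ` {..<n}. \<not> mono_dvd (lead_mono g) m) \<longleftrightarrow> (\<forall>m\<in>pkeys r. \<forall>k<n. lk m k < e k)"
    using lm by (auto simp: mono_dvd_single not_le)
  ultimately show ?thesis by (auto simp: Red_def)
qed

theorem nf_char:
  fixes t :: "nat \<Rightarrow> 'a::comm_ring_1 mpoly"
  assumes tri: "tri n t e" and inj: "inj_on t {..<n}" and r: "Red n e r" "h - r \<in> Idl n t"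
  shows "normal_form n (t ` {..<n}) h = r"
  unfolding normal_form_def mideal_Idl[OF inj] Red_iff[OF tri] conj_assoc[symmetric]
proof (rule the_equality)
  have "Red n e r \<and> h - r \<in> Idl n t" using r by blast
  then show "(mvars r \<subseteq> {..<n} \<and> h - r \<in> Idl n t) \<and> (\<forall>m\<in>pkeys r. \<forall>g\<in>t ` {..<n}. \<not> mono_dvd (lead_mono g) m)"
    using Red_iff[OF tri, of r] by blast
  fix r' assume "(mvars r' \<subseteq> {..<n} \<and> h - r' \<in> Idl n t) \<and> (\<forall>m\<in>pkeys r'. \<forall>g\<in>t ` {..<n}. \<not> mono_dvd (lead_mono g) m)"
  then have r': "Red n e r'" "h - r' \<in> Idl n t" using Red_iff[OF tri, of r'] by blast+
  have "r - r' = (h - r') - (h - r)" by simp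
  then have "r - r' \<in> Idl n t" using Idl_diff r'(2) r(2) by metis
  moreover have "Red n e (r - r')"
    using r(1) r'(1) keys_diff[of r r'] unfolding Red_def by blast
  ultimately have "r - r' = 0" using tri_unique[OF tri] by blast
  then show "r' = r" by simp
qed


lemma lk_mconst_mult: "lk (mconst a * q) m = a * lk q m"
proof (induction q rule: mpoly_induct)
  case (single m' c p)
  then show ?case by (simp add: distrib_left lookup_add mconst_def mult_single lookup_single when_def)
qed simp

lemma mdeg_eq_lk: "lk m k = mdeg m \<Longrightarrow> m = Poly_Mapping.single k (mdeg m)"
proof -
  assume a: "lk m k = mdeg m"
  have "mdeg m = (\<Sum>l\<in>insert k (pkeys m). lk m l)" by (rule mdeg_superset) auto
  also have "\<dots> = lk m k + (\<Sum>l\<in>pkeys m - {k}. lk m l)"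
    by (simp add: sum.insert_remove)
  finally have "(\<Sum>l\<in>pkeys m - {k}. lk m l) = 0" using a by simp
  then have z: "l \<in> pkeys m - {k} \<Longrightarrow> lk m l = 0" for l by simp
  show ?thesis
  proof (rule poly_mapping_eqI)
    fix l show "lk m l = lk (Poly_Mapping.single k (mdeg m)) l"
      using z[of l] a by (cases "l = k") (auto simp: lookup_single in_keys_iff)
  qed
qed

lemma GS_tri:
  fixes f :: "'a::comm_ring_1 poly"
  assumes fin: "finite S" and kS: "k \<in> S" and le: "\<forall>x\<in>S. x \<le> k" and cd: "card S \<le> degree f"
    and mon: "coeff f (degree f) = 1"
  shows "monic_in k (degree f + 1 - card S) (GS f S)" "\<forall>m\<in>pkeys (GS f S). pkeys m \<subseteq> S"
proof -
  let ?c = "card S" and ?d = "degree f"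
  define E where "E = ?d + 1 - ?c"
  have c1: "?c \<ge> 1" using fin kS by (metis One_nat_def Suc_leI card_gt_0_iff empty_iff)
  have keysGS: "pkeys (GS f S) \<subseteq> (\<Union>j\<in>{?c - 1..?d}. Ms S (j - (?c - 1)))"
  proof -
    have "pkeys (GS f S) \<subseteq> (\<Union>j\<in>{?c - 1..?d}. pkeys (mconst (coeff f j) * Hs S (j - (?c - 1)) :: 'a mpoly))"
      unfolding GS_def by (rule keys_sum)
    also have "\<dots> \<subseteq> (\<Union>j\<in>{?c - 1..?d}. Ms S (j - (?c - 1)))"
    proof -
      have "pkeys (mconst c * (Hs S i :: 'a mpoly)) \<subseteq> Ms S i" for c i
        using keys_mconst_mult[of c "Hs S i :: 'a mpoly"] keys_Hs[of S i] by (rule order.trans)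
      then show ?thesis by blast
    qed
    finally show ?thesis .
  qed
  have kprop: "pkeys m \<subseteq> S \<and> mdeg m \<le> E" if mk: "m \<in> pkeys (GS f S)" for m
  proof -
    obtain j where j: "j \<in> {?c - 1..?d}" "m \<in> Ms S (j - (?c - 1))" using keysGS mk by blast
    then have "pkeys m \<subseteq> S" "mdeg m = j - (?c - 1)" by (auto simp: Ms_def)
    moreover have "j - (?c - 1) \<le> E" using j(1) c1 by (auto simp: E_def)
    ultimately show ?thesis by simp
  qed
  show "\<forall>m\<in>pkeys (GS f S). pkeys m \<subseteq> S" using kprop by blast
  have "lk (GS f S) (Poly_Mapping.single k E) = (\<Sum>j\<in>{?c - 1..?d}. coeff f j * (if Poly_Mapping.single k E \<in> Ms S (j - (?c - 1)) then 1 else 0))"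
    unfolding GS_def lookup_sum by (simp add: lk_mconst_mult lk_Hs fin)
  also have "\<dots> = (\<Sum>j\<in>{?c - 1..?d}. if j = ?d then coeff f j else 0)"
  proof (intro sum.cong refl)
    fix j assume "j \<in> {?c - 1..?d}"
    then have "Poly_Mapping.single k E \<in> Ms S (j - (?c - 1)) \<longleftrightarrow> j = ?d"
      using kS c1 cd by (auto simp: Ms_def E_def)
    then show "coeff f j * (if Poly_Mapping.single k E \<in> Ms S (j - (?c - 1)) then 1 else 0) = (if j = ?d then coeff f j else 0)"
      by simp
  qed
  also have "\<dots> = 1" using mon cd by simp
  finally have l1: "lk (GS f S) (Poly_Mapping.single k E) = 1" .
  have "lk m k \<le> E \<and> (lk m k = E \<longrightarrow> m = Poly_Mapping.single k E)" if "m \<in> pkeys (GS f S)" for m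
  proof -
    have "mdeg m \<le> E" using kprop[OF that] by blast
    moreover have "lk m k \<le> mdeg m" by (rule lk_le_mdeg)
    moreover have "lk m k = E \<Longrightarrow> m = Poly_Mapping.single k E"
      using mdeg_eq_lk[of m k] calculation by simp
    ultimately show ?thesis by simp
  qed
  then show "monic_in k (degree f + 1 - card S) (GS f S)"
    using l1 unfolding monic_in_def E_def by blast
qed

lemma mset_poly_monic:
  "degree (mset_poly A :: 'a::idom poly) = size A \<and> coeff (mset_poly A) (degree (mset_poly A)) = 1"
proof (induction A)
  case empty
  then show ?case by (simp add: mset_poly_def)
next
  case (add a A)
  have eq: "mset_poly (add_mset a A) = [:-a, 1:] * mset_poly A" by (simp add: mset_poly_def)
  have nz: "mset_poly A \<noteq> 0" using add by auto
  have "degree ([:-a, 1:] * mset_poly A) = 1 + degree (mset_poly A)"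
    using nz by (subst degree_mult_eq) auto
  moreover have l: "lead_coeff ([:-a, 1:] * mset_poly A) = 1"
  proof -
    have h1: "lead_coeff ([:-a, 1:] :: 'a poly) = 1" by simp
    have h2: "lead_coeff (mset_poly A) = 1" using add by blast
    show ?thesis using lead_coeff_mult[of "[:-a, 1:]" "mset_poly A"] h1 h2 by (metis mult_1)
  qed
  ultimately have d: "degree (mset_poly (add_mset a A)) = size (add_mset a A)" using add eq by simp
  have "lead_coeff (mset_poly (add_mset a A)) = 1" unfolding eq by (rule l)
  then show ?case using d by blast
qed

section \<open>Vandermonde-like products\<close>

definition VP :: "nat set \<Rightarrow> 'a::comm_ring_1 mpoly" where
  "VP S = (\<Prod>(i, j)\<in>{(i, j). i \<in> S \<and> j \<in> S \<and> i < j}. mvar j - mvar i)"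

lemma finite_pairs: "finite S \<Longrightarrow> finite {(i, j). i \<in> S \<and> j \<in> S \<and> (i::nat) < j}"
  by (rule finite_subset[of _ "S \<times> S"]) auto

lemma VP_dvd:
  assumes "finite S" "{(i, j). i \<in> S' \<and> j \<in> S' \<and> i < j} \<subseteq> B" "B \<subseteq> {(i, j). i \<in> S \<and> j \<in> S \<and> (i::nat) < j}"
  shows "\<exists>q. (\<Prod>(i, j)\<in>B. mvar j - mvar i) = q * (VP S' :: 'a::comm_ring_1 mpoly)"
proof -
  have fB: "finite B" using finite_subset[OF assms(3) finite_pairs[OF assms(1)]] .
  show ?thesis unfolding VP_def
    using prod.subset_diff[OF assms(2) fB, of "\<lambda>(i, j). mvar j - mvar i :: 'a mpoly"] by blast
qed

lemma vandermonde_VP: "vandermonde n = VP {..<n}"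
proof -
  have "{(i, j). i < j \<and> j < n} = {(i, j). i \<in> {..<n} \<and> j \<in> {..<n} \<and> i < j}" by auto
  then show ?thesis by (simp add: vandermonde_def VP_def)
qed

lemma DD_in_Idl:
  fixes f :: "'a::comm_ring_1 poly"
  assumes "finite S" "S \<noteq> {}" "S \<subseteq> {..<n}"
  shows "VP S * GS f S \<in> Idl n (\<lambda>k. upoly_at f k)"
  using assms
proof (induction "card S" arbitrary: S rule: less_induct)
  case less
  show ?case
  proof (cases "card S = 1")
    case True
    then obtain a where S: "S = {a}" by (auto simp: card_Suc_eq)
    have e: "{(i, j). i \<in> {a} \<and> j \<in> {a} \<and> i < (j::nat)} = {}" by auto
    have "VP S = (1::'a mpoly)" unfolding VP_def S e by simp
    then show ?thesis using less.prems S by (simp add: GS_single Idl_gen)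
  next
    case False
    have "card S \<noteq> 0" using less.prems by simp
    then have c2: "card S \<ge> 2" using False by linarith
    define a where "a = Max S"
    define S1 where "S1 = S - {a}"
    have aS: "a \<in> S" using less.prems by (simp add: a_def)
    have "card S1 = card S - 1" using aS less.prems(1) by (simp add: S1_def)
    then have S1ne: "S1 \<noteq> {}" using c2 by auto
    have fS1: "finite S1" using less.prems by (simp add: S1_def)
    define b where "b = Max S1"
    have bS1: "b \<in> S1" using fS1 S1ne by (simp add: b_def)
    define T where "T = S1 - {b}"
    have "b \<le> a" using bS1 less.prems(1) unfolding a_def S1_def by (intro Max_ge) auto
    moreover have "b \<noteq> a" using bS1 by (simp add: S1_def)
    ultimately have ba: "b < a" by simp
    have Seq: "S = insert a (insert b T)" using aS bS1 by (auto simp: S1_def T_def)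
    have aT: "a \<notin> T" "b \<notin> T" "a \<noteq> b" using ba by (auto simp: T_def S1_def)
    have fT: "finite T" using fS1 by (simp add: T_def)
    define P where "P = {(i, j). i \<in> S \<and> j \<in> S \<and> (i::nat) < j}"
    have baP: "(b, a) \<in> P" using aS bS1 ba by (auto simp: P_def S1_def)
    have fP: "finite P" unfolding P_def using finite_pairs less.prems(1) .
    define R where "R = (\<Prod>(i, j)\<in>P - {(b, a)}. mvar j - mvar i :: 'a mpoly)"
    have VPS: "VP S = (mvar a - mvar b) * R"
    proof -
      have "VP S = (\<Prod>(i, j)\<in>insert (b, a) (P - {(b, a)}). mvar j - mvar i :: 'a mpoly)"
        unfolding VP_def P_def[symmetric] using baP by (simp add: insert_absorb)
      also have "\<dots> = (mvar a - mvar b) * R"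
        unfolding R_def using fP by (subst prod.insert) auto
      finally show ?thesis .
    qed
    have sub0: "P - {(b, a)} \<subseteq> {(i, j). i \<in> S \<and> j \<in> S \<and> i < j}" by (auto simp: P_def)
    have sub1: "{(i, j). i \<in> insert a T \<and> j \<in> insert a T \<and> i < j} \<subseteq> P - {(b, a)}"
      using aT unfolding P_def Seq by auto
    have sub2: "{(i, j). i \<in> insert b T \<and> j \<in> insert b T \<and> i < j} \<subseteq> P - {(b, a)}"
      using aT unfolding P_def Seq by auto
    obtain q1 where q1: "R = q1 * VP (insert a T)"
      using VP_dvd[OF less.prems(1) sub1 sub0] unfolding R_def by blast
    obtain q2 where q2: "R = q2 * VP (insert b T)"
      using VP_dvd[OF less.prems(1) sub2 sub0] unfolding R_def by blast
    have cards: "card (insert a T) < card S" "card (insert b T) < card S"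
      using aT fT by (simp_all add: Seq)
    have IHa: "VP (insert a T) * GS f (insert a T) \<in> Idl n (\<lambda>k. upoly_at f k)"
      using less.hyps[OF cards(1)] fT less.prems(3) by (auto simp: Seq)
    have IHb: "VP (insert b T) * GS f (insert b T) \<in> Idl n (\<lambda>k. upoly_at f k)"
      using less.hyps[OF cards(2)] fT less.prems(3) by (auto simp: Seq)
    have "VP S * GS f S = R * ((mvar a - mvar b) * GS f (insert a (insert b T)))"
      unfolding VPS by (simp only: Seq[symmetric] mult_ac)
    also have "\<dots> = R * (GS f (insert a T) - GS f (insert b T))"
      by (simp only: GS_diff[OF fT aT])
    also have "\<dots> = R * GS f (insert a T) - R * GS f (insert b T)"
      by (rule right_diff_distrib)
    also have "R * GS f (insert a T) = q1 * (VP (insert a T) * GS f (insert a T))"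
      by (subst q1) (rule mult.assoc)
    also have "R * GS f (insert b T) = q2 * (VP (insert b T) * GS f (insert b T))"
      by (subst q2) (rule mult.assoc)
    finally show ?thesis using IHa IHb by (simp add: Idl_diff Idl_mult)
  qed
qed

lemma keys_prod_bound:
  fixes \<phi> :: "'b \<Rightarrow> 'a::comm_ring_1 mpoly"
  assumes "finite P" "\<And>p m l. p \<in> P \<Longrightarrow> m \<in> pkeys (\<phi> p) \<Longrightarrow> lk m l \<le> w p l"
  shows "m \<in> pkeys (\<Prod>p\<in>P. \<phi> p) \<Longrightarrow> lk m l \<le> (\<Sum>p\<in>P. w p l)"
  using assms
proof (induction P arbitrary: m rule: finite_induct)
  case empty
  then show ?case by (simp split: if_splits)
next
  case (insert x F)
  obtain a b where ab: "m = a + b" "a \<in> pkeys (\<phi> x)" "b \<in> pkeys (\<Prod>p\<in>F. \<phi> p)"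
    using keys_mult_sub insert.prems(1) insert.hyps by (metis prod.insert)
  have "lk a l \<le> w x l" using insert.prems(2) ab(2) by blast
  moreover have "lk b l \<le> (\<Sum>p\<in>F. w p l)" using insert.IH[OF ab(3)] insert.prems(2) by blast
  ultimately have "lk m l \<le> w x l + (\<Sum>p\<in>F. w p l)" using ab(1) by (simp add: lookup_add)
  also have "\<dots> = (\<Sum>p\<in>insert x F. w p l)" using insert.hyps by (simp add: sum.insert)
  finally show ?case .
qed

lemma keys_vandermonde:
  assumes "m \<in> pkeys (vandermonde n :: 'a::comm_ring_1 mpoly)"
  shows "lk m l \<le> (if l < n then n - 1 else 0)"
proof -
  define P where "P = {(i, j). i < j \<and> j < (n::nat)}"
  have "P \<subseteq> {..<n} \<times> {..<n}" unfolding P_def by auto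
  then have fP: "finite P" using finite_subset by blast
  define w where "w p l = (if l = fst p \<or> l = snd p then 1 else (0::nat))" for p :: "nat \<times> nat" and l
  define \<phi> where "\<phi> p = (mvar (snd p) - mvar (fst p) :: 'a mpoly)" for p :: "nat \<times> nat"
  have "vandermonde n = (\<Prod>p\<in>P. \<phi> p)"
    unfolding vandermonde_def P_def \<phi>_def by (rule prod.cong) auto
  then have mP: "m \<in> pkeys (\<Prod>p\<in>P. \<phi> p)" using assms by simp
  have wb: "lk m' l' \<le> w p l'" if "p \<in> P" "m' \<in> pkeys (\<phi> p)" for p m' l'
  proof -
    have "m' \<in> pkeys (mvar (snd p) :: 'a mpoly) \<or> m' \<in> pkeys (mvar (fst p) :: 'a mpoly)"
      using that(2) keys_diff[of "mvar (snd p) :: 'a mpoly" "mvar (fst p)"] unfolding \<phi>_def by blast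
    then have "m' = Poly_Mapping.single (snd p) 1 \<or> m' = Poly_Mapping.single (fst p) 1"
      by (simp add: mvar_def)
    then show ?thesis by (auto simp: w_def lookup_single when_def)
  qed
  have bound: "lk m l \<le> (\<Sum>p\<in>P. w p l)"
    by (rule keys_prod_bound[OF fP wb mP])
  have "card {p\<in>P. l = fst p \<or> l = snd p} = (\<Sum>p\<in>{p\<in>P. l = fst p \<or> l = snd p}. 1)"
    by simp
  also have "\<dots> = (\<Sum>p\<in>P. w p l)"
    unfolding w_def using fP by (subst sum.inter_filter) auto
  finally have cs: "(\<Sum>p\<in>P. w p l) = card {p\<in>P. l = fst p \<or> l = snd p}" by simp
  have "card {p\<in>P. l = fst p \<or> l = snd p} \<le> (if l < n then n - 1 else 0)"
  proof (cases "l < n")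
    case True
    define g where "g p = (if fst p = l then snd p else fst p)" for p :: "nat \<times> nat"
    have inj: "inj_on g {p\<in>P. l = fst p \<or> l = snd p}"
      unfolding inj_on_def g_def P_def by auto
    have im: "g ` {p\<in>P. l = fst p \<or> l = snd p} \<subseteq> {..<n} - {l}"
      unfolding g_def P_def by auto
    have "card {p\<in>P. l = fst p \<or> l = snd p} \<le> card ({..<n} - {l})"
      using card_inj_on_le[OF inj im] by simp
    then show ?thesis using True by simp
  next
    case False
    then have e: "{p\<in>P. l = fst p \<or> l = snd p} = {}" by (auto simp: P_def)
    show ?thesis unfolding e using False by simp
  qed
  then show ?thesis using bound cs by linarith
qed


lemma tri_inj:
  assumes "tri n t e" "\<forall>k<n. e k > 0"
  shows "inj_on t {..<n}"
proof (rule inj_onI)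
  fix i j assume ij: "i \<in> {..<n}" "j \<in> {..<n}" "t i = t j"
  have "lead_mono (t i) = Poly_Mapping.single i (e i)"
    using assms(1) ij(1) by (intro lead_mono_eq) (auto simp: tri_def)
  moreover have "lead_mono (t j) = Poly_Mapping.single j (e j)"
    using assms(1) ij(2) by (intro lead_mono_eq) (auto simp: tri_def)
  ultimately have "Poly_Mapping.single i (e i) = Poly_Mapping.single j (e j)" using ij(3) by simp
  then have "lk (Poly_Mapping.single i (e i)) i = lk (Poly_Mapping.single j (e j)) i" by simp
  then show "i = j" using assms(2) ij(1) by (auto simp: lookup_single when_def split: if_splits)
qed

lemma tau_permutes: "Suc k < n \<Longrightarrow> tau k permutes {..<n}"
  unfolding permutes_def
proof (intro conjI allI impI)
  fix x assume "Suc k < n" "x \<notin> {..<n}"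
  then show "tau k x = x" by (auto simp: tau_def)
next
  fix y show "\<exists>!x. tau k x = y"
    by (metis tau.invol)
qed

lemma dd_Idl:
  fixes t :: "nat \<Rightarrow> 'a::idom mpoly"
  assumes "\<And>j. j < n \<Longrightarrow> dd k (t j) \<in> Idl n t" "p \<in> Idl n t"
  shows "dd k p \<in> Idl n t"
proof -
  obtain c where c: "p = (\<Sum>j<n. c j * t j)" using assms(2) by (auto simp: Idl_def)
  have "dd k p = (\<Sum>j<n. dd k (c j) * t j + mrename (tau k) (c j) * dd k (t j))"
    unfolding c dd_sum by (simp add: dd_mult)
  also have "\<dots> \<in> Idl n t"
    by (intro Idl_sum Idl_add Idl_mult Idl_gen assms(1)) auto
  finally show ?thesis .
qed

theorem main:
  fixes A :: "'a::field_char_0 multiset" and n d :: nat and h :: "'a mpoly"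
  assumes n1: "1 \<le> n" and nd: "n \<le> d" and sA: "size A = d"
    and sym: "symmetric_in n h"
  shows "vandermonde n * sym_hermite A n h = normal_form n (herm_F A n) (vandermonde n * h)"
proof -
  define f where "f = mset_poly A"
  have fd: "degree f = d" and fm: "coeff f d = 1"
    using mset_poly_monic[of A] sA by (auto simp: f_def)
  define tG where "tG k = GS f {..k}" for k
  define eG where "eG k = d - k" for k
  define tF where "tF k = upoly_at f k" for k
  define eF where "eF k = d" for k :: nat
  have triG: "tri n tG eG"
    unfolding tri_def
  proof (intro allI impI conjI)
    fix k assume k: "k < n"
    have "card {..k} \<le> degree f" using k nd fd by simp
    then have "monic_in k (degree f + 1 - card {..k}) (GS f {..k})" "\<forall>m\<in>pkeys (GS f {..k}). pkeys m \<subseteq> {..k}"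
      using GS_tri[of "{..k}" k f] fm fd by auto
    then show "monic_in k (eG k) (tG k)" "\<forall>m\<in>pkeys (tG k). pkeys m \<subseteq> {..k}"
      using fd by (auto simp: tG_def eG_def)
  qed
  have triF: "tri n tF eF"
    unfolding tri_def
  proof (intro allI impI conjI)
    fix k assume k: "k < n"
    have "card {k} \<le> degree f" using k nd fd n1 by simp
    then have "monic_in k (degree f + 1 - card {k}) (GS f {k})" "\<forall>m\<in>pkeys (GS f {k}). pkeys m \<subseteq> {k}"
      using GS_tri[of "{k}" k f] fm fd by auto
    then show "monic_in k (eF k) (tF k)" "\<forall>m\<in>pkeys (tF k). pkeys m \<subseteq> {..k}"
      using fd by (auto simp: tF_def eF_def GS_single)
  qed
  have injG: "inj_on tG {..<n}" using tri_inj[OF triG] nd by (auto simp: eG_def)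
  have injF: "inj_on tF {..<n}" using tri_inj[OF triF] nd n1 by (auto simp: eF_def)
  have GG: "herm_G (mset_poly A) n = tG ` {..<n}"
  proof -
    have "{1..n} = Suc ` {..<n}" by (simp add: image_Suc_lessThan)
    moreover have "herm_g f (Suc k) = tG k" for k
      by (simp add: herm_g_GS tG_def lessThan_Suc_atMost)
    ultimately show ?thesis by (simp add: herm_G_def f_def[symmetric] image_image)
  qed
  have FF: "herm_F A n = tF ` {..<n}" by (simp add: herm_F_def tF_def f_def)
  have hvars: "\<forall>m\<in>pkeys h. pkeys m \<subseteq> {..<n}"
    using sym by (auto simp: symmetric_in_def mvars_def)
  obtain r where rR: "Red n eG r" and hr: "h - r \<in> Idl n tG"
    using tri_exists[OF triG hvars] by blast
  have SH: "sym_hermite A n h = r"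
    unfolding sym_hermite_def GG by (rule nf_char[OF triG injG rR hr])
  have inv: "mrename (tau k) r = r" if k: "Suc k < n" for k
  proof -
    have ddG: "dd k (tG j) \<in> Idl n tG" if j: "j < n" for j
    proof (cases "j = k")
      case True
      have T: "insert k {..<k} = {..k}" "insert (Suc k) {..k} = {..Suc k}" by auto
      have "(mvar (Suc k) - mvar k) * tG (Suc k) = GS f (insert (Suc k) {..<k}) - tG k"
        using GS_diff[of "{..<k}" "Suc k" k f] by (simp add: tG_def T insert_commute)
      moreover have "mrename (tau k) (tG k) = GS f (insert (Suc k) {..<k})"
      proof -
        have "tau k ` {..k} = insert (Suc k) {..<k}"
          by (auto simp: tau_def image_iff)
        then show ?thesis by (simp add: tG_def tau.mrename_GS)
      qed
      ultimately have "(mvar (Suc k) - mvar k) * (- tG (Suc k)) = tG k - mrename (tau k) (tG k)"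
        by (simp add: algebra_simps)
      then have "dd k (tG k) = - tG (Suc k)" by (rule dd_unique[symmetric])
      then show ?thesis using True k by (simp add: Idl_uminus Idl_gen)
    next
      case False
      have "tau k ` {..j} = {..j}"
      proof (cases "j < k")
        case True
        then show ?thesis by (auto simp: tau_def image_iff)
      next
        case False
        then have "Suc k \<le> j" using \<open>j \<noteq> k\<close> by simp
        then show ?thesis by (auto simp: tau_def image_iff)
      qed
      then have "mrename (tau k) (tG j) = tG j" by (simp add: tG_def tau.mrename_GS)
      then show ?thesis by (simp add: dd_invariant)
    qed
    have hinv: "mrename (tau k) h = h" using sym tau_permutes[OF k] by (simp add: symmetric_in_def)
    have "dd k (h - r) \<in> Idl n tG" by (rule dd_Idl[OF ddG hr])
    then have "- dd k r \<in> Idl n tG"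
      using dd_invariant[OF hinv] by (simp add: dd_diff)
    then have ddr: "dd k r \<in> Idl n tG" using Idl_uminus[of "- dd k r" n tG] by simp
    have "Red n eG (dd k r)"
      unfolding Red_def
    proof
      fix x assume "x \<in> pkeys (dd k r)"
      then obtain m where m: "m \<in> pkeys r" "x \<in> pkeys (Dm k m :: 'a mpoly)" using keys_dd by blast
      then obtain \<alpha> \<beta> where x: "x = mk3 k m \<alpha> \<beta>" "\<alpha> < max (lk m k) (lk m (Suc k))" "\<beta> < max (lk m k) (lk m (Suc k))"
        using keys_Dm by blast
      have mk: "pkeys m \<subseteq> {..<n}" "\<forall>i<n. lk m i < eG i" using rR m(1) by (auto simp: Red_def)
      have b1: "lk m k < d - k" "lk m (Suc k) < d - Suc k" using mk(2) k by (auto simp: eG_def)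
      have "pkeys x \<subseteq> {..<n}"
      proof
        fix l assume "l \<in> pkeys x"
        then have "l = k \<or> l = Suc k \<or> l \<in> pkeys m" using x(1) by (auto simp: in_keys_iff lk_mk3 split: if_splits)
        then show "l \<in> {..<n}" using mk(1) k by auto
      qed
      moreover have "\<forall>i<n. lk x i < eG i"
        using x b1 mk(2) by (auto simp: lk_mk3 eG_def)
      ultimately show "pkeys x \<subseteq> {..<n} \<and> (\<forall>i<n. lk x i < eG i)" by blast
    qed
    then have "dd k r = 0" using tri_unique[OF triG] ddr by blast
    then show ?thesis by (rule dd_zero_imp)
  qed
  have degb: "\<forall>m\<in>pkeys r. lk m (n - 1 - j) \<le> d - n" if "j < n" for j
    using that
  proof (induction j)
    case 0
    show ?case
    proof
      fix m assume "m \<in> pkeys r"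
      then have "\<forall>k<n. lk m k < eG k" using rR unfolding Red_def by blast
      then have "lk m (n - 1) < eG (n - 1)" using n1 by simp
      then have "lk m (n - 1) < d - (n - 1)" by (simp add: eG_def)
      then show "lk m (n - 1 - 0) \<le> d - n" using n1 nd by simp
    qed
  next
    case (Suc j)
    define i where "i = n - 1 - Suc j"
    have si: "Suc i = n - 1 - j" "Suc (Suc i) \<le> n" using Suc.prems by (auto simp: i_def)
    show ?case
    proof
      fix m assume m: "m \<in> pkeys r"
      have "ren (tau i) m \<in> pkeys (mrename (tau i) r)" using m by (simp add: tau.keys_mrename)
      then have "ren (tau i) m \<in> pkeys r" using inv[of i] si by simp
      then have "lk (ren (tau i) m) (Suc i) \<le> d - n" using Suc.IH Suc.prems si by auto
      then show "lk m (n - 1 - Suc j) \<le> d - n" by (simp add: tau.lk_ren tau_def i_def)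
    qed
  qed
  have rdeg: "lk m i \<le> d - n" if "m \<in> pkeys r" "i < n" for m i
    using degb[of "n - 1 - i"] that by simp
  have rkeys: "pkeys m \<subseteq> {..<n}" if "m \<in> pkeys r" for m using rR that by (auto simp: Red_def)
  have RF: "Red n eF (vandermonde n * r)"
    unfolding Red_def
  proof
    fix x assume "x \<in> pkeys (vandermonde n * r)"
    then obtain a b where ab: "x = a + b" "a \<in> pkeys (vandermonde n :: 'a mpoly)" "b \<in> pkeys r"
      using keys_mult_sub by blast
    have "pkeys x \<subseteq> {..<n}"
    proof
      fix l assume "l \<in> pkeys x"
      then have "lk a l \<noteq> 0 \<or> lk b l \<noteq> 0" using ab(1) by (auto simp: in_keys_iff lookup_add)
      moreover have "l \<ge> n \<Longrightarrow> lk a l = 0" using keys_vandermonde[OF ab(2), of l] by simp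
      moreover have "l \<ge> n \<Longrightarrow> lk b l = 0" using rkeys[OF ab(3)] by (auto simp: in_keys_iff)
      ultimately show "l \<in> {..<n}" by force
    qed
    moreover have "\<forall>i<n. lk x i < eF i"
    proof (intro allI impI)
      fix i assume i: "i < n"
      have "lk a i \<le> n - 1" using keys_vandermonde[OF ab(2), of i] i by simp
      moreover have "lk b i \<le> d - n" using rdeg[OF ab(3) i] .
      ultimately show "lk x i < eF i" using ab(1) n1 nd by (simp add: lookup_add eF_def)
    qed
    ultimately show "pkeys x \<subseteq> {..<n} \<and> (\<forall>i<n. lk x i < eF i)" by blast
  qed
  have vG: "vandermonde n * tG j \<in> Idl n tF" if j: "j < n" for j
  proof -
    have sub1: "{(i, l). i \<in> {..j} \<and> l \<in> {..j} \<and> i < l} \<subseteq> {(i, l). i \<in> {..<n} \<and> l \<in> {..<n} \<and> i < (l::nat)}"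
      using j by auto
    obtain q where q: "VP {..<n} = q * (VP {..j} :: 'a mpoly)"
      using VP_dvd[OF _ sub1 order.refl] by (auto simp: VP_def)
    have "VP {..j} * GS f {..j} \<in> Idl n (\<lambda>k. upoly_at f k)"
      using j by (intro DD_in_Idl) auto
    moreover have "tF = upoly_at f" by (rule ext) (simp add: tF_def)
    ultimately have "q * (VP {..j} * GS f {..j}) \<in> Idl n tF" by (simp add: Idl_mult)
    then show ?thesis by (simp add: vandermonde_VP q tG_def mult.assoc)
  qed
  have "vandermonde n * (h - r) \<in> Idl n tF"
  proof -
    obtain c where c: "h - r = (\<Sum>j<n. c j * tG j)" using hr by (auto simp: Idl_def)
    have "vandermonde n * (h - r) = (\<Sum>j<n. c j * (vandermonde n * tG j))"
      unfolding c by (simp add: sum_distrib_left ac_simps)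
    also have "\<dots> \<in> Idl n tF" by (intro Idl_sum Idl_mult vG) auto
    finally show ?thesis .
  qed
  then have vh: "vandermonde n * h - vandermonde n * r \<in> Idl n tF" by (simp add: right_diff_distrib)
  have "normal_form n (herm_F A n) (vandermonde n * h) = vandermonde n * r"
    unfolding FF by (rule nf_char[OF triF injF RF vh])
  then show ?thesis using SH by simp
qed


theorem proposition3p3:
  fixes A :: "'a::field_char_0 multiset" and n d :: nat and h :: "'a mpoly"
  assumes "1 \<le> n" and "n \<le> d" and "size A = d"
    and "symmetric_in n h"
  shows "vandermonde n * sym_hermite A n h = normal_form n (herm_F A n) (vandermonde n * h)"
  using assms by (rule main)

end
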